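(* Let $n\ge2$, $\rho\ge0$, $\xi_n=\frac{n+1}{n-1}$, and let $\lambda_0,\dots,\lambda_{n-1}$ be the eigenvalues of $K_n(\rho)$ labeled as described in the context. Then $K_n(\rho)$ has exactly two extraordinary eigenvalues ($\lambda_0$ and $\lambda_1$) when $\rho>\xi_n$, exactly one ($\lambda_0$) when $1<\rho\le\xi_n$, and none when $0\le\rho\le1$. Furthermore: when $\rho=0$: $\lambda_{n-1}=\dots=\lambda_1=\lambda_0=1$; when $0<\rho<1$: $0<\frac{1-\rho}{1+\rho}<\lambda_{n-1}<\lambda_{n-2}<\dots<\lambda_1<\lambda_0<\frac{1+\rho}{1-\rho}$; when $\rho=1$: $\lambda_1=\dots=\lambda_{n-1}=0<\lambda_0=n$; when $1<\rho<\xi_n$: $-\frac{\rho+1}{\rho-1}<\lambda_1<\lambda_2<\dots<\lambda_{n-1}<-\frac{\rho-1}{\rho+1}<0<n<\lambda_0$; when $\rho=\xi_n$: $-n=\lambda_1<\lambda_2<\dots<\lambda_{n-1}<-\frac1n<0<n<\lambda_0$; when $\rho>\xi_n$: $\lambda_1<-n<-\frac{\rho+1}{\rho-1}<\lambda_2<\dots<\lambda_{n-1}<-\frac{\rho-1}{\rho+1}<0<n<\lambda_0$.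
   Context: $K_n(\rho)=\left[\rho^{|j-k|}\right]_{j,k=1}^n$ (with $\rho^0=1$). Ordinary/extraordinary: with $\sigma(\rho,\theta)=\frac{1-\rho^2}{1-2\rho\cos\theta+\rho^2}$ and $\mathrm{range}\{\sigma(\rho,\theta)\}=\{\sigma(\rho,\theta):\theta\in(-\pi,\pi]\}$, for real $\rho\notin\{\pm1\}$ an eigenvalue is ordinary if it lies in $\mathrm{range}\{\sigma(\rho,\theta)\}$; for $\rho\in\{0,\pm1\}$ all eigenvalues are ordinary; extraordinary means not ordinary. Labeling: $\lambda_k=\frac{1-\rho^2}{1-2\rho\cos\mu_k+\rho^2}=(-1)^k\frac{\sin n\mu_k}{\sin\mu_k}$ (indeterminate forms read as limits), where, with $c_n^{(t)}(\mu)=\frac{\cos\frac{\mu(n+1)}{2}}{\cos\frac{\mu(n-1)}{2}}$, $s_n^{(t)}(\mu)=\frac{\sin\frac{\mu(n+1)}{2}}{\sin\frac{\mu(n-1)}{2}}$, $c_n^{(h)}(x)=c_n^{(t)}(ix)$, $s_n^{(h)}(x)=s_n^{(t)}(ix)$ (extended continuously at $0$), $\alpha_k=\frac{(k-1)\pi}{n-1}$, $\beta_k=\frac{k\pi}{n}$, $\gamma_k=\frac{(k+1)\pi}{n+1}$: $\mu_0=ix_0$ with $x_0$ the unique root of $c_n^{(h)}(x)=\rho$ in $[0,\infty)$ if $\rho\ge1$, and the unique root of $c_n^{(t)}(\mu)=\rho$ in $[0,\gamma_0]$ if $0\le\rho\le1$; $\mu_1=ix_1$ with $x_1$ the unique root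 of $s_n^{(h)}(x)=\rho$ in $[0,\infty)$ if $\rho\ge\xi_n$, the unique root of $s_n^{(t)}(\mu)=\rho$ in $[0,\beta_1]$ if $1\le\rho\le\xi_n$, and in $[\beta_1,\gamma_1]$ if $0\le\rho\le1$; for even $k\ge2$ ($k\le n-1$), $\mu_k$ is the unique root of $c_n^{(t)}(\mu)=\rho$ in $(\alpha_k,\beta_k]$ if $\rho\ge1$ and in $[\beta_k,\gamma_k]$ if $0\le\rho\le1$; for odd $k\ge3$ ($k\le n-1$), the same with $s_n^{(t)}$ in place of $c_n^{(t)}$. *)

theory Defs
  imports Complex_Main "Jordan_Normal_Form.Char_Poly"
begin

text \<open>The Kac-Murdock-Szego matrix K_n(rho) = [rho^|j-k|], indices 0..n-1 (0^0 = 1).\<close>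
definition KMS :: "nat \<Rightarrow> real \<Rightarrow> real mat" where
  "KMS n \<rho> = mat n n (\<lambda>(j,k). \<rho> ^ (if j \<le> k then k - j else j - k))"

definition xi :: "nat \<Rightarrow> real" where
  "xi n = (real n + 1) / (real n - 1)"

definition sigma :: "real \<Rightarrow> real \<Rightarrow> real" where
  "sigma \<rho> \<theta> = (1 - \<rho>\<^sup>2) / (1 - 2 * \<rho> * cos \<theta> + \<rho>\<^sup>2)"

definition ordinary :: "real \<Rightarrow> real \<Rightarrow> bool" where
  "ordinary \<rho> l = (\<rho> \<in> {0, 1, -1} \<or> l \<in> {sigma \<rho> \<theta> | \<theta>. -pi < \<theta> \<and> \<theta> \<le> pi})"

definition extraordinary :: "real \<Rightarrow> real \<Rightarrow> bool" where
  "extraordinary \<rho> l = (\<not> ordinary \<rho> l)"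

text \<open>The functions c_n^(t), s_n^(t), c_n^(h), s_n^(h), continuously extended at 0.
  Away from 0, a root is only accepted where the denominator is nonzero (see ct_ok, st_ok).\<close>
definition ct :: "nat \<Rightarrow> real \<Rightarrow> real" where
  "ct n \<mu> = cos (\<mu> * (real n + 1) / 2) / cos (\<mu> * (real n - 1) / 2)"
definition st :: "nat \<Rightarrow> real \<Rightarrow> real" where
  "st n \<mu> = (if \<mu> = 0 then (real n + 1) / (real n - 1)
             else sin (\<mu> * (real n + 1) / 2) / sin (\<mu> * (real n - 1) / 2))"
definition ch :: "nat \<Rightarrow> real \<Rightarrow> real" where
  "ch n x = cosh (x * (real n + 1) / 2) / cosh (x * (real n - 1) / 2)"
definition sh :: "nat \<Rightarrow> real \<Rightarrow> real" where
  "sh n x = (if x = 0 then (real n + 1) / (real n - 1)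
             else sinh (x * (real n + 1) / 2) / sinh (x * (real n - 1) / 2))"

definition ct_root :: "nat \<Rightarrow> real \<Rightarrow> real \<Rightarrow> bool" where
  "ct_root n \<rho> \<mu> = (cos (\<mu> * (real n - 1) / 2) \<noteq> 0 \<and> ct n \<mu> = \<rho>)"
definition st_root :: "nat \<Rightarrow> real \<Rightarrow> real \<Rightarrow> bool" where
  "st_root n \<rho> \<mu> = ((\<mu> = 0 \<or> sin (\<mu> * (real n - 1) / 2) \<noteq> 0) \<and> st n \<mu> = \<rho>)"

definition alpha :: "nat \<Rightarrow> nat \<Rightarrow> real" where "alpha n k = (real k - 1) * pi / (real n - 1)"
definition beta :: "nat \<Rightarrow> nat \<Rightarrow> real" where "beta n k = real k * pi / real n"
definition gamma :: "nat \<Rightarrow> nat \<Rightarrow> real" where "gamma n k = (real k + 1) * pi / (real n + 1)"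

definition mu :: "nat \<Rightarrow> real \<Rightarrow> nat \<Rightarrow> complex" where
  "mu n \<rho> k =
    (if k = 0 then
       (if \<rho> \<ge> 1 then \<i> * complex_of_real (THE x. 0 \<le> x \<and> ch n x = \<rho>)
        else complex_of_real (THE m. 0 \<le> m \<and> m \<le> gamma n 0 \<and> ct_root n \<rho> m))
     else if k = 1 then
       (if \<rho> \<ge> xi n then \<i> * complex_of_real (THE x. 0 \<le> x \<and> sh n x = \<rho>)
        else if \<rho> \<ge> 1 then complex_of_real (THE m. 0 \<le> m \<and> m \<le> beta n 1 \<and> st_root n \<rho> m)
        else complex_of_real (THE m. beta n 1 \<le> m \<and> m \<le> gamma n 1 \<and> st_root n \<rho> m))
     else if even k then
       (if \<rho> \<ge> 1 then complex_of_real (THE m. alpha n k < m \<and> m \<le> beta n k \<and> ct_root n \<rho> m)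
        else complex_of_real (THE m. beta n k \<le> m \<and> m \<le> gamma n k \<and> ct_root n \<rho> m))
     else
       (if \<rho> \<ge> 1 then complex_of_real (THE m. alpha n k < m \<and> m \<le> beta n k \<and> st_root n \<rho> m)
        else complex_of_real (THE m. beta n k \<le> m \<and> m \<le> gamma n k \<and> st_root n \<rho> m)))"

text \<open>sin(n z)/sin z, read as its limit n cos(n z)/cos z where sin z = 0.\<close>
definition dirichlet_ratio :: "nat \<Rightarrow> complex \<Rightarrow> complex" where
  "dirichlet_ratio n z = (if sin z = 0 then of_nat n * cos (of_nat n * z) / cos z
                          else sin (of_nat n * z) / sin z)"

text \<open>lambda_k = (-1)^k sin(n mu_k)/sin(mu_k) (real for real or purely imaginary mu_k).\<close>
definition lam :: "nat \<Rightarrow> real \<Rightarrow> nat \<Rightarrow> real" where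
  "lam n \<rho> k = Re ((-1) ^ k * dirichlet_ratio n (mu n \<rho> k))"

end

theory Submission
  imports Defs "HOL-Analysis.Complex_Transcendental"
begin

definition kf :: "nat \<Rightarrow> real \<Rightarrow> (nat \<Rightarrow> real) \<Rightarrow> nat \<Rightarrow> real" where
  "kf n \<rho> v j = (\<Sum>l<n. \<rho> ^ (if j \<le> l then l - j else j - l) * v l)"

lemma KMS_mult: "j < n \<Longrightarrow> (KMS n \<rho> *\<^sub>v Matrix.vec n v) $ j = kf n \<rho> v j"
  unfolding KMS_def kf_def
  by (simp add: scalar_prod_def atLeast0LessThan)

lemma eig_iff:
  "eigenvalue (KMS n \<rho>) x \<longleftrightarrow> (\<exists>v. (\<exists>j<n. v j \<noteq> 0) \<and> (\<forall>j<n. kf n \<rho> v j = x * v j))"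
proof
  assume "eigenvalue (KMS n \<rho>) x"
  then obtain w where w: "w \<in> carrier_vec n" "w \<noteq> 0\<^sub>v n" "KMS n \<rho> *\<^sub>v w = x \<cdot>\<^sub>v w"
    unfolding eigenvalue_def eigenvector_def KMS_def by auto
  have ww: "w = Matrix.vec n (\<lambda>j. w $ j)" using w(1) by auto
  have "\<exists>j<n. w $ j \<noteq> 0"
  proof (rule ccontr)
    assume "\<not> ?thesis"
    then have "w = 0\<^sub>v n" using w(1) by (intro eq_vecI) auto
    with w(2) show False by simp
  qed
  moreover have "\<forall>j<n. kf n \<rho> (\<lambda>j. w $ j) j = x * w $ j"
  proof (intro allI impI)
    fix j assume j: "j < n"
    have "(KMS n \<rho> *\<^sub>v w) $ j = (x \<cdot>\<^sub>v w) $ j" using w(3) by simp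
    then show "kf n \<rho> (\<lambda>j. w $ j) j = x * w $ j"
      using KMS_mult[OF j, of \<rho> "\<lambda>j. w $ j"] ww j w(1) by simp
  qed
  ultimately show "\<exists>v. (\<exists>j<n. v j \<noteq> 0) \<and> (\<forall>j<n. kf n \<rho> v j = x * v j)" by blast
next
  assume "\<exists>v. (\<exists>j<n. v j \<noteq> 0) \<and> (\<forall>j<n. kf n \<rho> v j = x * v j)"
  then obtain v where v: "\<exists>j<n. v j \<noteq> 0" "\<forall>j<n. kf n \<rho> v j = x * v j" by blast
  have "eigenvector (KMS n \<rho>) (Matrix.vec n v) x"
    unfolding eigenvector_def
  proof (intro conjI)
    show "Matrix.vec n v \<in> carrier_vec (dim_row (KMS n \<rho>))" by (simp add: KMS_def)
    show "Matrix.vec n v \<noteq> 0\<^sub>v (dim_row (KMS n \<rho>))"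
    proof
      assume "Matrix.vec n v = 0\<^sub>v (dim_row (KMS n \<rho>))"
      then have "\<forall>j<n. Matrix.vec n v $ j = 0" by (simp add: KMS_def)
      with v(1) show False by auto
    qed
    show "KMS n \<rho> *\<^sub>v Matrix.vec n v = x \<cdot>\<^sub>v Matrix.vec n v"
      by (rule eq_vecI) (auto simp: KMS_mult v(2), simp_all add: KMS_def)
  qed
  then show "eigenvalue (KMS n \<rho>) x" unfolding eigenvalue_def by blast
qed

abbreviation ex :: "nat \<Rightarrow> nat \<Rightarrow> nat" where "ex j l \<equiv> (if j \<le> l then l - j else j - l)"

lemma coef_mid:
  fixes \<rho> :: real
  assumes "0 < j"
  shows "- \<rho> * \<rho> ^ ex (j - 1) l + (1 + \<rho>\<^sup>2) * \<rho> ^ ex j l - \<rho> * \<rho> ^ ex (j + 1) l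
         = (if l = j then 1 - \<rho>\<^sup>2 else 0)"
proof -
  consider "l < j" | "l = j" | "j < l" by linarith
  then show ?thesis
  proof cases
    case 1
    then obtain d where d: "j = Suc (l + d)" using less_iff_Suc_add by (metis add.commute)
    show ?thesis using 1 by (simp add: d power2_eq_square algebra_simps)
  next
    case 2 then show ?thesis using assms by (simp add: power2_eq_square)
  next
    case 3
    then obtain d where d: "l = Suc (j + d)" using less_iff_Suc_add by (metis add.commute)
    have e1: "Suc (j + d) - (j - 1) = Suc (Suc d)" using assms by simp
    show ?thesis using 3 assms by (simp add: d e1 power2_eq_square algebra_simps)
  qed
qed

lemma coef_first:
  fixes \<rho> :: real
  shows "\<rho> ^ ex 0 l - \<rho> * \<rho> ^ ex 1 l = (if l = 0 then 1 - \<rho>\<^sup>2 else 0)"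
  by (cases l) (auto simp: power2_eq_square)

lemma coef_last:
  fixes \<rho> :: real
  assumes "2 \<le> n" "l < n"
  shows "- \<rho> * \<rho> ^ ex (n - 2) l + \<rho> ^ ex (n - 1) l = (if l = n - 1 then 1 - \<rho>\<^sup>2 else 0)"
proof (cases "l = n - 1")
  case True then show ?thesis using assms by (simp add: power2_eq_square)
next
  case False
  then have "l < n - 1" using assms by simp
  then obtain d where d: "n - 1 = Suc (l + d)" using less_iff_Suc_add by (metis add.commute)
  have e: "n - 2 = l + d" using d by simp
  show ?thesis using False d e by (simp add: algebra_simps)
qed


lemma kf_T0:
  assumes "2 \<le> n"
  shows "kf n \<rho> v 0 - \<rho> * kf n \<rho> v 1 = (1 - \<rho>\<^sup>2) * v 0"
proof -
  have "kf n \<rho> v 0 - \<rho> * kf n \<rho> v 1 = (\<Sum>l<n. (\<rho> ^ ex 0 l - \<rho> * \<rho> ^ ex 1 l) * v l)"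
    unfolding kf_def by (simp add: sum_distrib_left sum_subtractf[symmetric] algebra_simps)
  also have "\<dots> = (\<Sum>l<n. (if l = 0 then (1 - \<rho>\<^sup>2) * v l else 0))"
    by (intro sum.cong refl) (metis coef_first mult_zero_left)
  also have "\<dots> = (1 - \<rho>\<^sup>2) * v 0" using assms by (simp add: sum.delta')
  finally show ?thesis .
qed

lemma kf_Tmid:
  assumes "0 < j" "j + 1 < n"
  shows "- \<rho> * kf n \<rho> v (j - 1) + (1 + \<rho>\<^sup>2) * kf n \<rho> v j - \<rho> * kf n \<rho> v (j + 1) = (1 - \<rho>\<^sup>2) * v j"
proof -
  have "- \<rho> * kf n \<rho> v (j - 1) + (1 + \<rho>\<^sup>2) * kf n \<rho> v j - \<rho> * kf n \<rho> v (j + 1)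
     = (\<Sum>l<n. (- \<rho> * \<rho> ^ ex (j - 1) l + (1 + \<rho>\<^sup>2) * \<rho> ^ ex j l - \<rho> * \<rho> ^ ex (j + 1) l) * v l)"
    unfolding kf_def
    by (simp add: sum_distrib_left sum_subtractf[symmetric] sum.distrib[symmetric] algebra_simps)
  also have "\<dots> = (\<Sum>l<n. (if l = j then (1 - \<rho>\<^sup>2) * v l else 0))"
    by (intro sum.cong refl) (simp only: coef_mid[OF assms(1)], simp)
  also have "\<dots> = (1 - \<rho>\<^sup>2) * v j" using assms by (simp add: sum.delta')
  finally show ?thesis .
qed

lemma kf_Tlast:
  assumes "2 \<le> n"
  shows "- \<rho> * kf n \<rho> v (n - 2) + kf n \<rho> v (n - 1) = (1 - \<rho>\<^sup>2) * v (n - 1)"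
proof -
  have "- \<rho> * kf n \<rho> v (n - 2) + kf n \<rho> v (n - 1) = (\<Sum>l<n. (- \<rho> * \<rho> ^ ex (n - 2) l + \<rho> ^ ex (n - 1) l) * v l)"
    unfolding kf_def by (simp add: sum_distrib_left sum.distrib[symmetric] algebra_simps)
  also have "\<dots> = (\<Sum>l<n. (if l = n - 1 then (1 - \<rho>\<^sup>2) * v l else 0))"
    apply (intro sum.cong refl)
    subgoal for l using coef_last[OF assms(1), of l \<rho>] by simp
    done
  also have "\<dots> = (1 - \<rho>\<^sup>2) * v (n - 1)" using assms by (simp add: sum.delta')
  finally show ?thesis .
qed

definition Tf :: "nat \<Rightarrow> real \<Rightarrow> (nat \<Rightarrow> real) \<Rightarrow> nat \<Rightarrow> real" where
  "Tf n \<rho> w j = (if j = 0 then w 0 - \<rho> * w 1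
                  else if j = n - 1 then - \<rho> * w (n - 2) + w (n - 1)
                  else - \<rho> * w (j - 1) + (1 + \<rho>\<^sup>2) * w j - \<rho> * w (j + 1))"

lemma Tf_cong:
  assumes "2 \<le> n" "j < n" "\<forall>i<n. f i = g i"
  shows "Tf n \<rho> f j = Tf n \<rho> g j"
  using assms unfolding Tf_def by auto

lemma Tf_lin: "Tf n \<rho> (\<lambda>i. f i - c * g i) j = Tf n \<rho> f j - c * Tf n \<rho> g j"
  unfolding Tf_def by (simp add: algebra_simps)

lemma Tf_scale: "Tf n \<rho> (\<lambda>i. c * g i) j = c * Tf n \<rho> g j"
  unfolding Tf_def by (simp add: algebra_simps)

lemma TK:
  assumes "2 \<le> n" "j < n"
  shows "Tf n \<rho> (kf n \<rho> v) j = (1 - \<rho>\<^sup>2) * v j"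
proof -
  consider "j = 0" | "j = n - 1" "j \<noteq> 0" | "0 < j" "j + 1 < n" using assms by linarith
  then show ?thesis
  proof cases
    case 1 then show ?thesis using kf_T0[OF assms(1)] by (simp add: Tf_def)
  next
    case 2 then show ?thesis using kf_Tlast[OF assms(1)] by (simp add: Tf_def)
  next
    case 3
    then have "j \<noteq> n - 1" by simp
    then show ?thesis using kf_Tmid[OF 3] 3 by (simp add: Tf_def)
  qed
qed

lemma T_inj:
  fixes \<rho> :: real
  assumes n: "2 \<le> n" and r: "0 < \<rho>" "\<rho> \<noteq> 1" and z: "\<forall>j<n. Tf n \<rho> z j = 0"
  shows "\<forall>j<n. z j = 0"
proof -
  have z0: "z 0 - \<rho> * z 1 = 0" using spec[OF z, of 0] n by (simp add: Tf_def)
  have zm: "- \<rho> * z (j - 1) + (1 + \<rho>\<^sup>2) * z j - \<rho> * z (j + 1) = 0" if "0 < j" "j + 1 < n" for j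
  proof -
    have "j \<noteq> n - 1" "j \<noteq> 0" using that by auto
    then show ?thesis using that spec[OF z, of j] by (simp add: Tf_def)
  qed
  have zl: "- \<rho> * z (n - 2) + z (n - 1) = 0" using spec[OF z, of "n - 1"] n by (simp add: Tf_def)
  have cl: "\<forall>i\<le>j. i < n \<longrightarrow> z i = z 0 / \<rho> ^ i" for j
  proof (induction j)
    case 0 then show ?case by simp
  next
    case (Suc j)
    show ?case
    proof (intro allI impI)
      fix i assume i: "i \<le> Suc j" "i < n"
      show "z i = z 0 / \<rho> ^ i"
      proof (cases "i \<le> j")
        case True then show ?thesis using Suc.IH i by blast
      next
        case False
        then have ii: "i = Suc j" using i by simp
        show ?thesis
        proof (cases j)
          case 0
          then show ?thesis using z0 r ii by (simp add: field_simps)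
        next
          case (Suc m)
          have a: "z j = z 0 / \<rho> ^ j" using Suc.IH i ii by (meson Suc_lessD order_refl)
          have b: "z m = z 0 / \<rho> ^ m" using Suc.IH i ii \<open>j = Suc m\<close>
          proof -
            have "m \<le> j" "m < n" using i ii \<open>j = Suc m\<close> by auto
            then show ?thesis using Suc.IH by blast
          qed
          have "- \<rho> * z m + (1 + \<rho>\<^sup>2) * z j - \<rho> * z (j + 1) = 0"
            using zm[of j] \<open>j = Suc m\<close> i ii by simp
          then have "z (Suc j) = ((1 + \<rho>\<^sup>2) * z j - \<rho> * z m) / \<rho>" using r by (simp add: field_simps)
          also have "\<dots> = z 0 / \<rho> ^ Suc j" unfolding a b using r \<open>j = Suc m\<close>
            by (simp add: field_simps power2_eq_square)
          finally show ?thesis using ii by simp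
        qed
      qed
    qed
  qed
  have "n - 2 < n" "n - 1 < n" using n by auto
  then have e1: "z (n - 2) = z 0 / \<rho> ^ (n - 2)" and e2: "z (n - 1) = z 0 / \<rho> ^ (n - 1)"
    using cl by (meson order_refl)+
  have "n - 1 = Suc (n - 2)" using n by simp
  then have h: "z (n - 1) = z (n - 2) / \<rho>" using e1 e2 by simp
  have "(1 - \<rho>\<^sup>2) * z (n - 2) = \<rho> * (- \<rho> * z (n - 2) + z (n - 1))"
    unfolding h using r by (simp add: field_simps power2_eq_square)
  then have "(1 - \<rho>\<^sup>2) * z (n - 2) = 0" using zl by simp
  moreover have "1 - \<rho>\<^sup>2 \<noteq> 0" using r
    using power2_eq_1_iff[of \<rho>] by auto
  ultimately have "z (n - 2) = 0" by simp
  then have "z 0 = 0" using e1 r by simp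
  then show ?thesis using cl by (metis div_0 order_refl)
qed

lemma forward:
  fixes \<rho> :: real
  assumes n: "2 \<le> n" and r: "0 < \<rho>" "\<rho> \<noteq> 1" and w: "\<forall>j<n. Tf n \<rho> w j = \<tau> * w j" and t: "\<tau> \<noteq> 0"
  shows "\<forall>j<n. kf n \<rho> w j = (1 - \<rho>\<^sup>2) / \<tau> * w j"
proof -
  define c where "c = (1 - \<rho>\<^sup>2) / \<tau>"
  have "\<forall>j<n. Tf n \<rho> (\<lambda>i. kf n \<rho> w i - c * w i) j = 0"
  proof (intro allI impI)
    fix j assume j: "j < n"
    have "Tf n \<rho> (\<lambda>i. kf n \<rho> w i - c * w i) j = (1 - \<rho>\<^sup>2) * w j - c * (\<tau> * w j)"
      unfolding Tf_lin TK[OF n j] w[rule_format, OF j] ..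
    also have "\<dots> = 0" unfolding c_def using t by simp
    finally show "Tf n \<rho> (\<lambda>i. kf n \<rho> w i - c * w i) j = 0" .
  qed
  from T_inj[OF n r this] show ?thesis unfolding c_def by simp
qed

lemma backward:
  fixes \<rho> :: real
  assumes n: "2 \<le> n" and r: "\<rho>\<^sup>2 \<noteq> 1" and v: "\<forall>j<n. kf n \<rho> v j = x * v j" and nz: "\<exists>j<n. v j \<noteq> 0"
  shows "x \<noteq> 0 \<and> (\<forall>j<n. Tf n \<rho> v j = (1 - \<rho>\<^sup>2) / x * v j)"
proof -
  have key: "x * Tf n \<rho> v j = (1 - \<rho>\<^sup>2) * v j" if j: "j < n" for j
  proof -
    have "Tf n \<rho> (kf n \<rho> v) j = Tf n \<rho> (\<lambda>i. x * v i) j" by (rule Tf_cong[OF n j]) (simp add: v)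
    then show ?thesis using TK[OF n j] Tf_scale by simp
  qed
  have x: "x \<noteq> 0"
  proof
    assume "x = 0"
    then have "\<forall>j<n. v j = 0" using key r by simp
    with nz show False by blast
  qed
  show ?thesis using x key by (simp add: field_simps)
qed

lemma sinh_mult_ge: "(x::real) \<ge> 0 \<Longrightarrow> sinh (real m * x) \<ge> real m * sinh x"
proof (induction m)
  case 0 then show ?case by simp
next
  case (Suc k)
  have "sinh (real (Suc k) * x) = sinh (real k * x) * cosh x + cosh (real k * x) * sinh x"
    by (simp add: distrib_right sinh_add)
  also have "\<dots> \<ge> sinh (real k * x) + sinh x"
  proof -
    have "sinh (real k * x) \<ge> 0" using Suc.prems by simp
    then have "sinh (real k * x) * cosh x \<ge> sinh (real k * x) * 1"
      using mult_left_mono[OF cosh_real_ge_1[of x]] by blast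
    moreover have "cosh (real k * x) * sinh x \<ge> sinh x"
      using mult_right_mono[OF cosh_real_ge_1[of "real k * x"], of "sinh x"] Suc.prems by simp
    ultimately show ?thesis by linarith
  qed
  finally show ?case using Suc by (simp add: distrib_right)
qed

lemma sinh_mult_gt: assumes "(x::real) > 0" "m \<ge> 2" shows "sinh (real m * x) > real m * sinh x"
proof -
  obtain k where k: "m = Suc k" "k \<ge> 1" using assms by (cases m) auto
  have "real m * sinh x \<le> sinh (real k * x) + sinh x"
    using sinh_mult_ge[of x k] assms k by (simp add: distrib_right)
  also have "sinh (real k * x) + sinh x < sinh (real k * x) * cosh x + cosh (real k * x) * sinh x"
  proof -
    have "sinh (real k * x) > 0" using assms k by simp
    moreover have "cosh x > 1" using assms cosh_real_ge_1[of x] cosh_real_one_iff[of x] by linarith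
    ultimately have "sinh (real k * x) * cosh x > sinh (real k * x)" by simp
    moreover have "cosh (real k * x) * sinh x \<ge> sinh x"
      using mult_right_mono[OF cosh_real_ge_1[of "real k * x"], of "sinh x"] assms by simp
    ultimately show ?thesis by linarith
  qed
  also have "\<dots> = sinh (real m * x)"
    by (simp add: k distrib_right sinh_add)
  finally show ?thesis .
qed

lemma sin_mult_le: "\<bar>sin (real m * x)\<bar> \<le> real m * \<bar>sin x\<bar>"
proof (induction m)
  case 0 then show ?case by simp
next
  case (Suc k)
  have "\<bar>sin (real (Suc k) * x)\<bar> = \<bar>sin (real k * x) * cos x + cos (real k * x) * sin x\<bar>"
    by (simp add: distrib_right sin_add algebra_simps)
  also have "\<dots> \<le> \<bar>sin (real k * x)\<bar> * \<bar>cos x\<bar> + \<bar>cos (real k * x)\<bar> * \<bar>sin x\<bar>"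
    by (metis abs_mult abs_triangle_ineq)
  also have "\<dots> \<le> \<bar>sin (real k * x)\<bar> + \<bar>sin x\<bar>"
    by (intro add_mono) (auto intro: mult_left_le mult_left_le_one_le)
  finally show ?case using Suc by (simp add: distrib_right)
qed

lemma sin_mult_lt: assumes "0 < x" "x < pi" "m \<ge> 2" shows "\<bar>sin (real m * x)\<bar> < real m * sin x"
proof -
  obtain k where k: "m = Suc k" "k \<ge> 1" using assms by (cases m) auto
  have s: "sin x > 0" using assms sin_gt_zero by blast
  have c: "\<bar>cos x\<bar> < 1"
  proof -
    have "cos x ^ 2 < 1" using s sin_squared_eq[of x] by (smt (verit) zero_less_power)
    then show ?thesis by (simp add: abs_square_less_1)
  qed
  have "\<bar>sin (real m * x)\<bar> = \<bar>sin (real k * x) * cos x + cos (real k * x) * sin x\<bar>"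
    by (simp add: k distrib_right sin_add algebra_simps)
  also have "\<dots> \<le> \<bar>sin (real k * x)\<bar> * \<bar>cos x\<bar> + \<bar>cos (real k * x)\<bar> * \<bar>sin x\<bar>"
    by (metis abs_mult abs_triangle_ineq)
  also have "\<dots> < real k * sin x + sin x"
  proof -
    have "\<bar>sin (real k * x)\<bar> * \<bar>cos x\<bar> \<le> real k * sin x * \<bar>cos x\<bar>"
      using sin_mult_le[of k x] s by (simp add: mult_right_mono)
    also have "\<dots> < real k * sin x" using k s c by simp
    finally have 1: "\<bar>sin (real k * x)\<bar> * \<bar>cos x\<bar> < real k * sin x" .
    have 2: "\<bar>cos (real k * x)\<bar> * \<bar>sin x\<bar> \<le> sin x" using s by (simp add: mult_left_le_one_le)
    from 1 2 show ?thesis by linarith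
  qed
  finally show ?thesis by (simp add: k distrib_right)
qed

lemma alg1: assumes "(a::real)\<^sup>2 = c\<^sup>2 - 1" "b\<^sup>2 = d\<^sup>2 - 1" shows "d\<^sup>2 - c\<^sup>2 = - (a * d + c * b) * (a * d - c * b)"
proof -
  have "- (a * d + c * b) * (a * d - c * b) = c\<^sup>2 * b\<^sup>2 - a\<^sup>2 * d\<^sup>2" by (simp add: algebra_simps power2_eq_square)
  also have "\<dots> = d\<^sup>2 - c\<^sup>2" unfolding assms by (simp add: algebra_simps power2_eq_square)
  finally show ?thesis by simp
qed
lemma alg2: assumes "(a::real)\<^sup>2 = c\<^sup>2 - 1" "b\<^sup>2 = d\<^sup>2 - 1" shows "c\<^sup>2 + d\<^sup>2 - 2 * c * d * (c * d - a * b) = - (a * d - c * b)\<^sup>2"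
proof -
  have "- (a * d - c * b)\<^sup>2 = 2 * a * b * c * d - a\<^sup>2 * d\<^sup>2 - c\<^sup>2 * b\<^sup>2" by (simp add: algebra_simps power2_eq_square)
  also have "\<dots> = c\<^sup>2 + d\<^sup>2 - 2 * c * d * (c * d - a * b)" unfolding assms by (simp add: algebra_simps power2_eq_square)
  finally show ?thesis by simp
qed
lemma alg3: assumes "(a::real)\<^sup>2 = c\<^sup>2 - 1" "b\<^sup>2 = d\<^sup>2 - 1" shows "b\<^sup>2 - a\<^sup>2 = - (a * d + c * b) * (a * d - c * b)"
proof -
  have "- (a * d + c * b) * (a * d - c * b) = c\<^sup>2 * b\<^sup>2 - a\<^sup>2 * d\<^sup>2" by (simp add: algebra_simps power2_eq_square)
  also have "\<dots> = b\<^sup>2 - a\<^sup>2" unfolding assms by (simp add: algebra_simps power2_eq_square)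
  finally show ?thesis by simp
qed
lemma alg4: assumes "(a::real)\<^sup>2 = c\<^sup>2 - 1" "b\<^sup>2 = d\<^sup>2 - 1" shows "a\<^sup>2 + b\<^sup>2 - 2 * a * b * (c * d - a * b) = (a * d - c * b)\<^sup>2"
proof -
  have "(a * d - c * b)\<^sup>2 = a\<^sup>2 * d\<^sup>2 - 2 * a * b * c * d + c\<^sup>2 * b\<^sup>2" by (simp add: algebra_simps power2_eq_square)
  also have "\<dots> = a\<^sup>2 * (b\<^sup>2 + 1) - 2 * a * b * c * d + (a\<^sup>2 + 1) * b\<^sup>2"
  proof -
    have "c\<^sup>2 = a\<^sup>2 + 1" "d\<^sup>2 = b\<^sup>2 + 1" using assms by simp_all
    then show ?thesis by simp
  qed
  also have "\<dots> = a\<^sup>2 + b\<^sup>2 - 2 * a * b * (c * d - a * b)" by (simp add: algebra_simps power2_eq_square)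
  finally show ?thesis by simp
qed
lemma alg5: assumes "(a::real)\<^sup>2 = 1 - c\<^sup>2" "b\<^sup>2 = 1 - d\<^sup>2" shows "d\<^sup>2 - c\<^sup>2 = (a * d + c * b) * (a * d - c * b)"
proof -
  have "(a * d + c * b) * (a * d - c * b) = a\<^sup>2 * d\<^sup>2 - c\<^sup>2 * b\<^sup>2" by (simp add: algebra_simps power2_eq_square)
  also have "\<dots> = d\<^sup>2 - c\<^sup>2" unfolding assms by (simp add: algebra_simps power2_eq_square)
  finally show ?thesis by simp
qed
lemma alg6: assumes "(a::real)\<^sup>2 = 1 - c\<^sup>2" "b\<^sup>2 = 1 - d\<^sup>2" shows "c\<^sup>2 + d\<^sup>2 - 2 * c * d * (c * d + a * b) = (a * d - c * b)\<^sup>2"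
proof -
  have "(a * d - c * b)\<^sup>2 = a\<^sup>2 * d\<^sup>2 - 2 * a * b * c * d + c\<^sup>2 * b\<^sup>2" by (simp add: algebra_simps power2_eq_square)
  also have "\<dots> = c\<^sup>2 + d\<^sup>2 - 2 * c * d * (c * d + a * b)" unfolding assms by (simp add: algebra_simps power2_eq_square)
  finally show ?thesis by simp
qed

lemma hyp_id1: "(cosh B)\<^sup>2 - (cosh A)\<^sup>2 = - sinh (A + B) * sinh (A - B)" for A B :: real
  unfolding sinh_add sinh_diff by (rule alg1[OF sinh_square_eq sinh_square_eq])
lemma hyp_id2: "(cosh A)\<^sup>2 + (cosh B)\<^sup>2 - 2 * cosh A * cosh B * cosh (A - B) = - (sinh (A - B))\<^sup>2" for A B :: real
  unfolding sinh_diff cosh_diff by (rule alg2[OF sinh_square_eq sinh_square_eq])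
lemma hyp_id3: "(sinh B)\<^sup>2 - (sinh A)\<^sup>2 = - sinh (A + B) * sinh (A - B)" for A B :: real
  unfolding sinh_add sinh_diff by (rule alg3[OF sinh_square_eq sinh_square_eq])
lemma hyp_id4: "(sinh A)\<^sup>2 + (sinh B)\<^sup>2 - 2 * sinh A * sinh B * cosh (A - B) = (sinh (A - B))\<^sup>2" for A B :: real
  unfolding sinh_diff cosh_diff by (rule alg4[OF sinh_square_eq sinh_square_eq])
lemma trig_id1: "(cos B)\<^sup>2 - (cos A)\<^sup>2 = sin (A + B) * sin (A - B)" for A B :: real
  unfolding sin_add sin_diff by (rule alg5[OF sin_squared_eq sin_squared_eq])
lemma trig_id2: "(cos A)\<^sup>2 + (cos B)\<^sup>2 - 2 * cos A * cos B * cos (A - B) = (sin (A - B))\<^sup>2" for A B :: real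
  unfolding sin_diff cos_diff by (rule alg6[OF sin_squared_eq sin_squared_eq])

lemma sinh_rec: "sinh (x + t) = 2 * cosh t * sinh x - sinh (x - t)" for x t :: real
  by (simp add: sinh_add sinh_diff algebra_simps)

lemma core:
  fixes u :: "nat \<Rightarrow> real" and t r :: real
  assumes n: "2 \<le> n" and t: "0 < t"
    and u1: "u 1 = (2 * cosh t - r) * u 0"
    and mid: "\<forall>j. 0 < j \<and> j + 1 < n \<longrightarrow> u (j + 1) = 2 * cosh t * u j - u (j - 1)"
    and last: "u (n - 2) = (2 * cosh t - r) * u (n - 1)"
    and nz: "\<exists>j<n. u j \<noteq> 0"
  shows "sinh (t * (real n + 1) / 2) = r * sinh (t * (real n - 1) / 2)
       \<or> cosh (t * (real n + 1) / 2) = r * cosh (t * (real n - 1) / 2)"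
proof -
  define \<phi> where "\<phi> j = sinh ((real j + 1) * t) - r * sinh (real j * t)" for j :: nat
  have st: "sinh t > 0" using t by simp
  have \<phi>rec: "\<phi> (j + 1) = 2 * cosh t * \<phi> j - \<phi> (j - 1)" if "0 < j" for j
  proof -
    define X where "X = (real j + 1) * t"
    have lin: "p - r * q = 2 * c * (q - r * s) - (s - r * u)"
      if "p = 2 * c * q - s" "q = 2 * c * s - u" for p q s u c :: real
    proof -
      have h2: "r * q = r * (2 * c * s - u)" using that(2) by simp
      show ?thesis unfolding that(1) h2 by (simp add: algebra_simps)
    qed
    have e1: "\<phi> (j + 1) = sinh (X + t) - r * sinh X" unfolding \<phi>_def X_def by (simp add: algebra_simps)
    have e2: "\<phi> j = sinh X - r * sinh (X - t)" unfolding \<phi>_def X_def by (simp add: algebra_simps)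
    have e3: "\<phi> (j - 1) = sinh (X - t) - r * sinh (X - t - t)"
      unfolding \<phi>_def X_def using that by (simp add: of_nat_diff algebra_simps)
    have "sinh (X + t) - r * sinh X = 2 * cosh t * (sinh X - r * sinh (X - t)) - (sinh (X - t) - r * sinh (X - t - t))"
      by (rule lin) (use sinh_rec[of X t] sinh_rec[of "X - t" t] in simp_all)
    then show ?thesis unfolding e1 e2 e3 .
  qed
  have \<phi>0: "\<phi> 0 = sinh t" by (simp add: \<phi>_def)
  have \<phi>1: "\<phi> 1 = (2 * cosh t - r) * sinh t"
    unfolding \<phi>_def using sinh_double[of t] by (simp add: algebra_simps)
  have cl: "\<forall>i\<le>j. i < n \<longrightarrow> u i = u 0 / sinh t * \<phi> i" for j
  proof (induction j)
    case 0 then show ?case using \<phi>0 st by simp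
  next
    case (Suc j)
    show ?case
    proof (intro allI impI)
      fix i assume i: "i \<le> Suc j" "i < n"
      show "u i = u 0 / sinh t * \<phi> i"
      proof (cases "i \<le> j")
        case True then show ?thesis using Suc.IH i by blast
      next
        case False
        then have ii: "i = Suc j" using i by simp
        show ?thesis
        proof (cases j)
          case 0
          then show ?thesis using u1 ii \<phi>1 st by simp
        next
          case (Suc m)
          have a: "u j = u 0 / sinh t * \<phi> j" using Suc.IH i ii by (meson Suc_lessD order_refl)
          have b: "u m = u 0 / sinh t * \<phi> m"
          proof -
            have "m \<le> j" "m < n" using i ii \<open>j = Suc m\<close> by auto
            then show ?thesis using Suc.IH by blast
          qed
          have "u (j + 1) = 2 * cosh t * u j - u (j - 1)" using mid i ii \<open>j = Suc m\<close> by simp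
          also have "\<dots> = u 0 / sinh t * (2 * cosh t * \<phi> j - \<phi> (j - 1))"
            using a b \<open>j = Suc m\<close> by (simp add: algebra_simps)
          also have "\<dots> = u 0 / sinh t * \<phi> (j + 1)" using \<phi>rec[of j] \<open>j = Suc m\<close> by simp
          finally show ?thesis using ii by simp
        qed
      qed
    qed
  qed
  then have clo: "u i = u 0 / sinh t * \<phi> i" if "i < n" for i using that by blast
  have u0: "u 0 \<noteq> 0"
  proof
    assume "u 0 = 0"
    then have "\<forall>j<n. u j = 0" using clo by simp
    with nz show False by blast
  qed
  have "n - 2 < n" "n - 1 < n" using n by auto
  with last have "u 0 / sinh t * \<phi> (n - 2) = (2 * cosh t - r) * (u 0 / sinh t * \<phi> (n - 1))"
    using clo by metis
  then have "u 0 / sinh t * \<phi> (n - 2) = u 0 / sinh t * ((2 * cosh t - r) * \<phi> (n - 1))"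
    by (simp only: mult.left_commute)
  moreover have "u 0 / sinh t \<noteq> 0" using u0 st by simp
  ultimately have eq: "\<phi> (n - 2) = (2 * cosh t - r) * \<phi> (n - 1)" by simp
  define m where "m = n - 2"
  have nm: "n - 1 = m + 1" "real n = real m + 2" using n unfolding m_def by auto
  define s where "s k = sinh ((real m + k) * t)" for k :: real
  have s2: "2 * cosh t * s 2 = s 3 + s 1" and s1: "2 * cosh t * s 1 = s 2 + s 0"
    using sinh_rec[of "(real m + 2) * t" t] sinh_rec[of "(real m + 1) * t" t]
    unfolding s_def by (simp_all add: algebra_simps)
  have p1: "\<phi> (n - 2) = s 1 - r * s 0" and p2: "\<phi> (n - 1) = s 2 - r * s 1"
    unfolding \<phi>_def s_def m_def[symmetric] nm(1) by (simp_all add: algebra_simps)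
  have "s 1 - r * s 0 = (2 * cosh t - r) * (s 2 - r * s 1)" using eq unfolding p1 p2 .
  also have "\<dots> = 2 * cosh t * s 2 - r * s 2 - r * (2 * cosh t * s 1) + r * r * s 1"
    by (simp add: algebra_simps)
  finally have E1: "s 1 - r * s 0 = s 3 + s 1 - r * s 2 - r * (s 2 + s 0) + r * r * s 1"
    unfolding s1 s2 .
  have "s 3 - 2 * r * s 2 + r * r * s 1 = (s 3 + s 1 - r * s 2 - r * (s 2 + s 0) + r * r * s 1) - (s 1 - r * s 0)"
    by (simp add: algebra_simps)
  also have "\<dots> = 0" unfolding E1 by simp
  finally have E0: "s 3 - 2 * r * s 2 + r * r * s 1 = 0" .
  define A where "A = t * (real n + 1) / 2"
  define B where "B = t * (real n - 1) / 2"
  have q: "s 3 = sinh (2 * A)" "s 2 = sinh (A + B)" "s 1 = sinh (2 * B)"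
    unfolding s_def A_def B_def nm by (simp_all add: field_simps)
  have "2 * ((sinh A - r * sinh B) * (cosh A - r * cosh B)) = sinh (2 * A) - 2 * r * sinh (A + B) + r * r * sinh (2 * B)"
    unfolding sinh_double sinh_add by (simp add: algebra_simps)
  also have "\<dots> = 0" using E0 unfolding q .
  finally have "2 * ((sinh A - r * sinh B) * (cosh A - r * cosh B)) = 0" .
  then show ?thesis unfolding A_def[symmetric] B_def[symmetric] by auto
qed

lemma rec_of_T:
  fixes \<rho> \<tau> :: real
  assumes r: "0 < \<rho>" and n: "2 \<le> n" and v: "\<forall>j<n. Tf n \<rho> v j = \<tau> * v j"
    and C: "\<tau> = 1 + \<rho>\<^sup>2 - 2 * \<rho> * C"
  shows "v 1 = (2 * C - \<rho>) * v 0"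
    and "\<forall>j. 0 < j \<and> j + 1 < n \<longrightarrow> v (j + 1) = 2 * C * v j - v (j - 1)"
    and "v (n - 2) = (2 * C - \<rho>) * v (n - 1)"
proof -
  have e0: "v 0 - \<rho> * v 1 = \<tau> * v 0" using spec[OF v, of 0] n by (simp add: Tf_def)
  have "\<rho> * v 1 = \<rho> * ((2 * C - \<rho>) * v 0)"
  proof -
    have "\<rho> * v 1 = v 0 - \<tau> * v 0" using e0 by simp
    also have "\<dots> = \<rho> * ((2 * C - \<rho>) * v 0)" unfolding C by (simp add: algebra_simps power2_eq_square)
    finally show ?thesis .
  qed
  then show "v 1 = (2 * C - \<rho>) * v 0" using r by simp
  show "\<forall>j. 0 < j \<and> j + 1 < n \<longrightarrow> v (j + 1) = 2 * C * v j - v (j - 1)"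
  proof (intro allI impI)
    fix j assume j: "0 < j \<and> j + 1 < n"
    then have "j \<noteq> 0" "j \<noteq> n - 1" "j < n" by auto
    then have em: "- \<rho> * v (j - 1) + (1 + \<rho>\<^sup>2) * v j - \<rho> * v (j + 1) = \<tau> * v j"
      using spec[OF v, of j] by (simp add: Tf_def)
    have "\<rho> * v (j + 1) = - \<rho> * v (j - 1) + (1 + \<rho>\<^sup>2) * v j - \<tau> * v j" using em by simp
    also have "\<dots> = \<rho> * (2 * C * v j - v (j - 1))" unfolding C by (simp add: algebra_simps power2_eq_square)
    finally show "v (j + 1) = 2 * C * v j - v (j - 1)" using r by simp
  qed
  have el: "- \<rho> * v (n - 2) + v (n - 1) = \<tau> * v (n - 1)" using spec[OF v, of "n - 1"] n by (simp add: Tf_def)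
  have "\<rho> * v (n - 2) = v (n - 1) - \<tau> * v (n - 1)" using el by simp
  also have "\<dots> = \<rho> * ((2 * C - \<rho>) * v (n - 1))" unfolding C by (simp add: algebra_simps power2_eq_square)
  finally show "v (n - 2) = (2 * C - \<rho>) * v (n - 1)" using r by simp
qed

lemma hyp_back:
  fixes \<rho> x :: real
  assumes n: "2 \<le> n" and r: "0 < \<rho>" "\<rho> \<noteq> 1" and ev: "eigenvalue (KMS n \<rho>) x"
    and ex: "extraordinary \<rho> x"
  shows "\<exists>t>0. (cosh (t * (real n + 1) / 2) = \<rho> * cosh (t * (real n - 1) / 2)
               \<or> sinh (t * (real n + 1) / 2) = \<rho> * sinh (t * (real n - 1) / 2))
             \<and> x = (1 - \<rho>\<^sup>2) / (1 + \<rho>\<^sup>2 - 2 * \<rho> * cosh t)"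
proof -
  obtain v where nz: "\<exists>j<n. v j \<noteq> 0" and v: "\<forall>j<n. kf n \<rho> v j = x * v j"
    using ev unfolding eig_iff by blast
  have r2: "\<rho>\<^sup>2 \<noteq> 1" using r power2_eq_1_iff[of \<rho>] by auto
  define \<tau> where "\<tau> = (1 - \<rho>\<^sup>2) / x"
  from backward[OF n r2 v nz] have x0: "x \<noteq> 0" and T: "\<forall>j<n. Tf n \<rho> v j = \<tau> * v j"
    unfolding \<tau>_def by auto
  have t0: "\<tau> \<noteq> 0" using x0 r2 unfolding \<tau>_def by simp
  define C where "C = (1 + \<rho>\<^sup>2 - \<tau>) / (2 * \<rho>)"
  have tC: "\<tau> = 1 + \<rho>\<^sup>2 - 2 * \<rho> * C" unfolding C_def using r by simp
  have xC: "x = (1 - \<rho>\<^sup>2) / \<tau>" unfolding \<tau>_def using x0 r2 by simp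
  note R = rec_of_T[OF r(1) n T tC]
  consider "\<bar>C\<bar> \<le> 1" | "C > 1" | "C < -1" by linarith
  then show ?thesis
  proof cases
    case 1
    define \<theta> where "\<theta> = arccos C"
    have th: "0 \<le> \<theta>" "\<theta> \<le> pi" "cos \<theta> = C" using arccos[of C] 1 unfolding \<theta>_def by auto
    have "sigma \<rho> \<theta> = x" unfolding sigma_def th(3) xC tC by (simp add: algebra_simps)
    then have "ordinary \<rho> x" unfolding ordinary_def using th(1,2) pi_gt_zero
      by (intro disjI2 CollectI exI[of _ \<theta>]) (auto intro: less_le_trans[of _ 0])
    with ex show ?thesis unfolding extraordinary_def by blast
  next
    case 2
    define t where "t = arcosh C"
    have ct: "cosh t = C" "t > 0" unfolding t_def using 2 by auto
    have "sinh (t * (real n + 1) / 2) = \<rho> * sinh (t * (real n - 1) / 2)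
       \<or> cosh (t * (real n + 1) / 2) = \<rho> * cosh (t * (real n - 1) / 2)"
      by (rule core[OF n ct(2)]) (use R nz ct(1) in auto)
    moreover have "x = (1 - \<rho>\<^sup>2) / (1 + \<rho>\<^sup>2 - 2 * \<rho> * cosh t)" unfolding xC tC ct(1) ..
    ultimately show ?thesis using ct(2) by blast
  next
    case 3
    define t where "t = arcosh (- C)"
    have ct: "cosh t = - C" "t > 0" unfolding t_def using 3 by auto
    define u where "u j = (-1) ^ j * v j" for j
    have u1: "u 1 = (2 * cosh t - (- \<rho>)) * u 0" unfolding u_def ct(1) using R(1) by (simp add: algebra_simps)
    have um: "\<forall>j. 0 < j \<and> j + 1 < n \<longrightarrow> u (j + 1) = 2 * cosh t * u j - u (j - 1)"
    proof (intro allI impI)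
      fix j assume j: "0 < j \<and> j + 1 < n"
      then obtain i where i: "j = Suc i" by (cases j) auto
      have "v (j + 1) = 2 * C * v j - v (j - 1)" using R(2) j by blast
      then have h: "v (Suc (Suc i)) = 2 * C * v (Suc i) - v i" unfolding i by simp
      show "u (j + 1) = 2 * cosh t * u j - u (j - 1)"
        unfolding u_def ct(1) i by (simp add: h algebra_simps)
    qed
    have ul: "u (n - 2) = (2 * cosh t - (- \<rho>)) * u (n - 1)"
    proof -
      obtain i where i: "n - 1 = Suc i" "n - 2 = i" using n by (cases "n - 1") auto
      have h: "v i = (2 * C - \<rho>) * v (Suc i)" using R(3) i by simp
      show ?thesis unfolding u_def ct(1) i h by (simp add: algebra_simps)
    qed
    have unz: "\<exists>j<n. u j \<noteq> 0" using nz unfolding u_def by auto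
    from core[OF n ct(2) u1 um ul unz]
    have dis: "sinh (t * (real n + 1) / 2) = - \<rho> * sinh (t * (real n - 1) / 2)
       \<or> cosh (t * (real n + 1) / 2) = - \<rho> * cosh (t * (real n - 1) / 2)" by simp
    have pos: "t * (real n + 1) / 2 > 0" "t * (real n - 1) / 2 > 0" using ct(2) n by auto
    have a1: "sinh (t * (real n + 1) / 2) > 0" using pos(1) by simp
    have a2: "\<rho> * sinh (t * (real n - 1) / 2) > 0" using pos(2) r by simp
    have a3: "cosh (t * (real n + 1) / 2) > 0" by simp
    have a4: "\<rho> * cosh (t * (real n - 1) / 2) > 0" using r by simp
    have False using dis a1 a2 a3 a4 by auto
    then show ?thesis ..
  qed
qed

lemma sinh_cosh_ps: "sinh P * cosh Q = (sinh (P + Q) + sinh (P - Q)) / 2" for P Q :: real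
  by (simp add: sinh_add sinh_diff)
lemma cosh_sinh_ps: "cosh P * sinh Q = (sinh (P + Q) - sinh (P - Q)) / 2" for P Q :: real
  by (simp add: sinh_add sinh_diff)

lemma mvt_inc:
  fixes f f' :: "real \<Rightarrow> real"
  assumes "a < b" "\<And>z. a \<le> z \<Longrightarrow> z \<le> b \<Longrightarrow> (f has_real_derivative f' z) (at z)"
    "\<And>z. a < z \<Longrightarrow> z < b \<Longrightarrow> f' z > 0"
  shows "f a < f b"
proof -
  obtain z where z: "a < z" "z < b" "f b - f a = (b - a) * f' z" using MVT2[OF assms(1,2)] by blast
  have "(b - a) * f' z > 0" using assms(1,3) z by simp
  then show ?thesis using z by simp
qed

lemma ch_strict:
  assumes n: "2 \<le> n" and xy: "0 \<le> x" "x < y"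
  shows "ch n x < ch n y"
proof -
  define A where "A = (real n + 1) / 2"
  define B where "B = (real n - 1) / 2"
  have chAB: "ch n z = cosh (z * A) / cosh (z * B)" for z unfolding ch_def A_def B_def by simp
  define f' where "f' z = (A * sinh (z * A) * cosh (z * B) - B * cosh (z * A) * sinh (z * B)) / (cosh (z * B))\<^sup>2" for z
  have d: "((\<lambda>z. cosh (z * A) / cosh (z * B)) has_real_derivative f' z) (at z)" for z
    unfolding f'_def
    by (auto intro!: derivative_eq_intros simp: power2_eq_square algebra_simps)
  have p: "f' z > 0" if "0 < z" for z
  proof -
    have eq: "A * sinh (z * A) * cosh (z * B) - B * cosh (z * A) * sinh (z * B)
        = (sinh (real n * z) + real n * sinh z) / 2"
      unfolding A_def B_def mult.assoc[symmetric]
      unfolding mult.assoc sinh_cosh_ps cosh_sinh_ps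
      by (simp add: field_simps)
    have s1: "sinh (real n * z) > 0" using that n by simp
    have s2: "real n * sinh z > 0" using that n by simp
    have "A * sinh (z * A) * cosh (z * B) - B * cosh (z * A) * sinh (z * B) > 0"
      unfolding eq by (intro divide_pos_pos add_pos_pos s1 s2) simp
    then show ?thesis unfolding f'_def by (intro divide_pos_pos) auto
  qed
  have "cosh (x * A) / cosh (x * B) < cosh (y * A) / cosh (y * B)"
    by (rule mvt_inc[OF xy(2) d]) (use p xy in auto)
  then show ?thesis unfolding chAB .
qed

lemma sh_ratio_strict:
  assumes n: "2 \<le> n" and xy: "0 < x" "x < y"
  shows "sinh (x * (real n + 1) / 2) / sinh (x * (real n - 1) / 2) < sinh (y * (real n + 1) / 2) / sinh (y * (real n - 1) / 2)"
proof -
  define A where "A = (real n + 1) / 2"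
  define B where "B = (real n - 1) / 2"
  have B: "B > 0" unfolding B_def using n by simp
  have e: "z * (real n + 1) / 2 = z * A" "z * (real n - 1) / 2 = z * B" for z unfolding A_def B_def by simp_all
  define f' where "f' z = (A * cosh (z * A) * sinh (z * B) - B * sinh (z * A) * cosh (z * B)) / (sinh (z * B))\<^sup>2" for z
  have d: "((\<lambda>z. sinh (z * A) / sinh (z * B)) has_real_derivative f' z) (at z)" if "0 < z" for z
  proof -
    have "sinh (z * B) \<noteq> 0" using B that by simp
    then show ?thesis unfolding f'_def
      by (auto intro!: derivative_eq_intros simp: power2_eq_square algebra_simps)
  qed
  have p: "f' z > 0" if "0 < z" for z
  proof -
    have "A * cosh (z * A) * sinh (z * B) - B * sinh (z * A) * cosh (z * B)
        = (sinh (real n * z) - real n * sinh z) / 2"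
      unfolding A_def B_def mult.assoc[symmetric]
      unfolding mult.assoc sinh_cosh_ps cosh_sinh_ps
      by (simp add: field_simps)
    moreover have "sinh (real n * z) > real n * sinh z" using sinh_mult_gt that n by blast
    moreover have "sinh (z * B) \<noteq> 0" using B that by simp
    ultimately show ?thesis unfolding f'_def by simp
  qed
  have "sinh (x * A) / sinh (x * B) < sinh (y * A) / sinh (y * B)"
    by (rule mvt_inc[OF xy(2) d]) (use p xy in auto)
  then show ?thesis unfolding e .
qed

lemma sh_gt_xi:
  assumes n: "2 \<le> n" and x: "0 < x"
  shows "sinh (x * (real n + 1) / 2) / sinh (x * (real n - 1) / 2) > xi n"
proof -
  define A where "A = (real n + 1) / 2"
  define B where "B = (real n - 1) / 2"
  have B: "B > 0" "A > B" unfolding A_def B_def using n by simp_all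
  have e: "z * (real n + 1) / 2 = z * A" "z * (real n - 1) / 2 = z * B" for z unfolding A_def B_def by simp_all
  have xiAB: "xi n = A / B"
  proof -
    have "real n - 1 \<noteq> 0" using n by simp
    then show ?thesis unfolding xi_def A_def B_def by (simp add: field_simps)
  qed
  define f' where "f' z = B * (cosh (z * A) * A) - A * (cosh (z * B) * B)" for z
  have d: "((\<lambda>z. B * sinh (z * A) - A * sinh (z * B)) has_real_derivative f' z) (at z)" for z
    unfolding f'_def by (auto intro!: derivative_eq_intros)
  have p: "f' z > 0" if "0 < z" for z
  proof -
    have "cosh (z * A) > cosh (z * B)" using B that by (simp add: cosh_real_nonneg_less_iff)
    then have "A * B * cosh (z * A) > A * B * cosh (z * B)" using B by simp
    then show ?thesis unfolding f'_def by (simp add: algebra_simps)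
  qed
  have "B * sinh (0 * A) - A * sinh (0 * B) < B * sinh (x * A) - A * sinh (x * B)"
    by (rule mvt_inc[OF x d]) (use p in auto)
  then have "A * sinh (x * B) < B * sinh (x * A)" by simp
  moreover have "sinh (x * B) > 0" using B x by simp
  ultimately have "A / B < sinh (x * A) / sinh (x * B)" using B by (simp add: field_simps)
  then show ?thesis unfolding e xiAB .
qed

lemma sh_strict:
  assumes n: "2 \<le> n" and xy: "0 \<le> x" "x < y"
  shows "sh n x < sh n y"
proof (cases "x = 0")
  case True
  then show ?thesis using sh_gt_xi[OF n] xy unfolding sh_def xi_def by auto
next
  case False
  then show ?thesis using sh_ratio_strict[OF n, of x y] xy unfolding sh_def by auto
qed

lemma ch_exists:
  assumes n: "2 \<le> n" and r: "1 \<le> \<rho>"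
  shows "\<exists>x\<ge>0. ch n x = \<rho>"
proof -
  define X where "X = arcosh \<rho>"
  have X: "X \<ge> 0" "cosh X = \<rho>" unfolding X_def using r by auto
  define g where "g z = cosh (z * (real n + 1) / 2) - \<rho> * cosh (z * (real n - 1) / 2)" for z
  have g0: "g 0 \<le> 0" unfolding g_def using r by simp
  have gX: "0 \<le> g X"
  proof -
    have e: "X * (real n + 1) / 2 = X * (real n - 1) / 2 + X" by (simp add: field_simps)
    have "sinh (X * (real n - 1) / 2) * sinh X \<ge> 0" using X n by simp
    then show ?thesis unfolding g_def e cosh_add X(2) by (simp add: algebra_simps)
  qed
  have "continuous_on {0..X} g" unfolding g_def by (intro continuous_intros) auto
  from IVT'[of g 0 0 X, OF g0 gX X(1) this] obtain x where x: "0 \<le> x" "g x = 0" by auto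
  then have "ch n x = \<rho>" unfolding g_def ch_def by (simp add: field_simps)
  with x show ?thesis by blast
qed

lemma ch_unique: "2 \<le> n \<Longrightarrow> 0 \<le> x \<Longrightarrow> 0 \<le> y \<Longrightarrow> ch n x = ch n y \<Longrightarrow> x = y"
  by (metis ch_strict linorder_neq_iff order_less_irrefl)

lemma sh_unique: "2 \<le> n \<Longrightarrow> 0 \<le> x \<Longrightarrow> 0 \<le> y \<Longrightarrow> sh n x = sh n y \<Longrightarrow> x = y"
  by (metis sh_strict linorder_neq_iff order_less_irrefl)

lemma sh_exists:
  assumes n: "2 \<le> n" and r: "xi n \<le> \<rho>"
  shows "\<exists>x\<ge>0. sh n x = \<rho>"
proof (cases "\<rho> = xi n")
  case True
  then show ?thesis unfolding sh_def xi_def by (intro exI[of _ 0]) simp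
next
  case False
  then have r2: "xi n < \<rho>" using r by simp
  have xi1: "xi n > 1" unfolding xi_def using n by (simp add: field_simps)
  define A where "A = (real n + 1) / 2"
  define B where "B = (real n - 1) / 2"
  have B: "B > 0" unfolding B_def using n by simp
  have xiAB: "xi n = A / B"
  proof -
    have "real n - 1 \<noteq> 0" using n by simp
    then show ?thesis unfolding xi_def A_def B_def by (simp add: field_simps)
  qed
  have AB: "A - \<rho> * B < 0" using r2 B unfolding xiAB by (simp add: field_simps)
  define X where "X = arcosh \<rho>"
  have X: "X > 0" "cosh X = \<rho>" unfolding X_def using r2 xi1 by auto
  define g where "g z = sinh (z * A) - \<rho> * sinh (z * B)" for z
  have dg: "(g has_real_derivative (A - \<rho> * B)) (at 0)"
    unfolding g_def by (auto intro!: derivative_eq_intros)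
  obtain d where d: "d > 0" "\<forall>h>0. h < d \<longrightarrow> g 0 > g (0 + h)"
    using DERIV_neg_dec_right[OF dg AB] by blast
  define h where "h = min (d / 2) (X / 2)"
  have h: "h > 0" "h < d" "h \<le> X" unfolding h_def using d X by auto
  have gh: "g h \<le> 0" using d(2) h unfolding g_def by fastforce
  have gX: "0 \<le> g X"
  proof -
    have e: "X * A = X * B + X" unfolding A_def B_def by (simp add: field_simps)
    have "cosh (X * B) * sinh X \<ge> 0" using X by simp
    then show ?thesis unfolding g_def e sinh_add X(2) by (simp add: algebra_simps)
  qed
  have "continuous_on {h..X} g" unfolding g_def by (intro continuous_intros)
  from IVT'[of g h 0 X, OF gh gX h(3) this] obtain x where x: "h \<le> x" "g x = 0" by auto
  have "x > 0" using x h by simp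
  moreover have "sinh (x * B) \<noteq> 0" using \<open>x > 0\<close> B by simp
  ultimately have "sh n x = \<rho>" using x(2) unfolding g_def sh_def A_def B_def
    by (simp add: field_simps)
  with \<open>x > 0\<close> show ?thesis by (intro exI[of _ x]) simp
qed

lemma mu0_hyp:
  assumes n: "2 \<le> n" and r: "1 \<le> \<rho>"
  shows "\<exists>x\<ge>0. ch n x = \<rho> \<and> mu n \<rho> 0 = \<i> * complex_of_real x"
proof -
  obtain x where x: "0 \<le> x" "ch n x = \<rho>" using ch_exists[OF n r] by blast
  have "(THE x. 0 \<le> x \<and> ch n x = \<rho>) = x"
    by (rule the_equality) (use x ch_unique[OF n] in auto)
  then show ?thesis using x r unfolding mu_def by auto
qed

lemma mu1_hyp:
  assumes n: "2 \<le> n" and r: "xi n \<le> \<rho>"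
  shows "\<exists>x\<ge>0. sh n x = \<rho> \<and> mu n \<rho> 1 = \<i> * complex_of_real x"
proof -
  obtain x where x: "0 \<le> x" "sh n x = \<rho>" using sh_exists[OF n r] by blast
  have "(THE x. 0 \<le> x \<and> sh n x = \<rho>) = x"
    by (rule the_equality) (use x sh_unique[OF n] in auto)
  then show ?thesis using x r unfolding mu_def by auto
qed

lemma sin_ii: "sin (\<i> * complex_of_real x) = \<i> * complex_of_real (sinh x)"
  by (simp add: sin_i_times exp_of_real sinh_field_def exp_minus)

lemma lam_hyp:
  assumes "mu n \<rho> k = \<i> * complex_of_real x"
  shows "lam n \<rho> k = (-1) ^ k * (if x = 0 then real n else sinh (real n * x) / sinh x)"
proof (cases "x = 0")
  case True
  then show ?thesis unfolding lam_def assms dirichlet_ratio_def by simp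
next
  case False
  have a: "of_nat n * (\<i> * complex_of_real x) = \<i> * complex_of_real (real n * x)" by simp
  have "dirichlet_ratio n (\<i> * complex_of_real x) = complex_of_real (sinh (real n * x) / sinh x)"
    unfolding dirichlet_ratio_def a sin_ii using False by simp
  then show ?thesis unfolding lam_def assms using False by simp
qed

lemma hyp_lam_c:
  fixes x \<rho> :: real
  assumes x: "x \<noteq> 0" and P: "cosh (x * (real n + 1) / 2) = \<rho> * cosh (x * (real n - 1) / 2)"
  shows "1 + \<rho>\<^sup>2 - 2 * \<rho> * cosh x < 0"
    and "(1 - \<rho>\<^sup>2) / (1 + \<rho>\<^sup>2 - 2 * \<rho> * cosh x) = sinh (real n * x) / sinh x"
proof -
  define p where "p = x * (real n + 1) / 2"
  define q where "q = x * (real n - 1) / 2"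
  have pq: "p - q = x" "p + q = real n * x" unfolding p_def q_def by (simp_all add: field_simps)
  have cq: "cosh q > 0" by simp
  have t: "(1 + \<rho>\<^sup>2 - 2 * \<rho> * cosh x) * (cosh q)\<^sup>2 = - (sinh x)\<^sup>2"
  proof -
    have "(1 + \<rho>\<^sup>2 - 2 * \<rho> * cosh x) * (cosh q)\<^sup>2
        = (cosh p)\<^sup>2 + (cosh q)\<^sup>2 - 2 * cosh p * cosh q * cosh (p - q)"
      unfolding pq(1) P[folded p_def q_def] by (simp add: algebra_simps power2_eq_square)
    also have "\<dots> = - (sinh x)\<^sup>2" using hyp_id2[of p q] unfolding pq(1) .
    finally show ?thesis .
  qed
  have u: "(1 - \<rho>\<^sup>2) * (cosh q)\<^sup>2 = - sinh (real n * x) * sinh x"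
  proof -
    have "(1 - \<rho>\<^sup>2) * (cosh q)\<^sup>2 = (cosh q)\<^sup>2 - (cosh p)\<^sup>2"
      unfolding P[folded p_def q_def] by (simp add: algebra_simps power2_eq_square)
    also have "\<dots> = - sinh (real n * x) * sinh x" unfolding hyp_id1 pq ..
    finally show ?thesis .
  qed
  have sx: "sinh x \<noteq> 0" using x by simp
  have "(sinh x)\<^sup>2 > 0" using sx by simp
  then have "(1 + \<rho>\<^sup>2 - 2 * \<rho> * cosh x) * (cosh q)\<^sup>2 < 0" unfolding t by simp
  then show neg: "1 + \<rho>\<^sup>2 - 2 * \<rho> * cosh x < 0" using cq by (simp add: mult_less_0_iff)
  have "(1 - \<rho>\<^sup>2) / (1 + \<rho>\<^sup>2 - 2 * \<rho> * cosh x)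
      = ((1 - \<rho>\<^sup>2) * (cosh q)\<^sup>2) / ((1 + \<rho>\<^sup>2 - 2 * \<rho> * cosh x) * (cosh q)\<^sup>2)"
    using cq by simp
  also have "\<dots> = sinh (real n * x) / sinh x" unfolding t u using sx by (simp add: power2_eq_square)
  finally show "(1 - \<rho>\<^sup>2) / (1 + \<rho>\<^sup>2 - 2 * \<rho> * cosh x) = sinh (real n * x) / sinh x" .
qed

lemma hyp_lam_s:
  fixes x \<rho> :: real
  assumes n: "2 \<le> n" and x: "0 < x" and P: "sinh (x * (real n + 1) / 2) = \<rho> * sinh (x * (real n - 1) / 2)"
  shows "1 + \<rho>\<^sup>2 - 2 * \<rho> * cosh x > 0"
    and "(1 - \<rho>\<^sup>2) / (1 + \<rho>\<^sup>2 - 2 * \<rho> * cosh x) = - (sinh (real n * x) / sinh x)"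
proof -
  define p where "p = x * (real n + 1) / 2"
  define q where "q = x * (real n - 1) / 2"
  have pq: "p - q = x" "p + q = real n * x" unfolding p_def q_def by (simp_all add: field_simps)
  have sq: "sinh q \<noteq> 0" unfolding q_def using x n by simp
  then have sq2: "(sinh q)\<^sup>2 > 0" by simp
  have t: "(1 + \<rho>\<^sup>2 - 2 * \<rho> * cosh x) * (sinh q)\<^sup>2 = (sinh x)\<^sup>2"
  proof -
    have "(1 + \<rho>\<^sup>2 - 2 * \<rho> * cosh x) * (sinh q)\<^sup>2
        = (sinh p)\<^sup>2 + (sinh q)\<^sup>2 - 2 * sinh p * sinh q * cosh (p - q)"
      unfolding pq(1) P[folded p_def q_def] by (simp add: algebra_simps power2_eq_square)
    also have "\<dots> = (sinh x)\<^sup>2" using hyp_id4[of p q] unfolding pq(1) .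
    finally show ?thesis .
  qed
  have u: "(1 - \<rho>\<^sup>2) * (sinh q)\<^sup>2 = - sinh (real n * x) * sinh x"
  proof -
    have "(1 - \<rho>\<^sup>2) * (sinh q)\<^sup>2 = (sinh q)\<^sup>2 - (sinh p)\<^sup>2"
      unfolding P[folded p_def q_def] by (simp add: algebra_simps power2_eq_square)
    also have "\<dots> = - sinh (real n * x) * sinh x" unfolding hyp_id3 pq ..
    finally show ?thesis .
  qed
  have sx: "sinh x \<noteq> 0" using x by simp
  have "(sinh x)\<^sup>2 > 0" using sx by simp
  then show "1 + \<rho>\<^sup>2 - 2 * \<rho> * cosh x > 0" using t sq2
    by (metis zero_less_mult_pos2)
  have "(1 - \<rho>\<^sup>2) / (1 + \<rho>\<^sup>2 - 2 * \<rho> * cosh x)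
      = ((1 - \<rho>\<^sup>2) * (sinh q)\<^sup>2) / ((1 + \<rho>\<^sup>2 - 2 * \<rho> * cosh x) * (sinh q)\<^sup>2)"
    using sq by simp
  also have "\<dots> = - (sinh (real n * x) / sinh x)" unfolding t u using sx by (simp add: power2_eq_square)
  finally show "(1 - \<rho>\<^sup>2) / (1 + \<rho>\<^sup>2 - 2 * \<rho> * cosh x) = - (sinh (real n * x) / sinh x)" .
qed

lemma tev_of:
  fixes F :: "real \<Rightarrow> real" and x \<rho> :: real
  assumes n: "2 \<le> n"
    and hm: "\<And>\<theta>. F (\<theta> - x) + F (\<theta> + x) = 2 * cosh x * F \<theta>"
    and h0: "F (- ((real n - 1) / 2 * x)) - \<rho> * F (- ((real n - 1) / 2 * x) + x) = \<tau> * F (- ((real n - 1) / 2 * x))"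
    and hl: "- \<rho> * F ((real n - 1) / 2 * x - x) + F ((real n - 1) / 2 * x) = \<tau> * F ((real n - 1) / 2 * x)"
    and tau: "\<tau> = 1 + \<rho>\<^sup>2 - 2 * \<rho> * cosh x"
  shows "\<forall>j<n. Tf n \<rho> (\<lambda>j. F ((real j - (real n - 1) / 2) * x)) j = \<tau> * F ((real j - (real n - 1) / 2) * x)"
proof (intro allI impI)
  fix j assume j: "j < n"
  define w where "w j = F ((real j - (real n - 1) / 2) * x)" for j
  consider "j = 0" | "j = n - 1" "j \<noteq> 0" | "0 < j" "j + 1 < n" using j by linarith
  then show "Tf n \<rho> w j = \<tau> * w j"
  proof cases
    case 1
    have "w 0 = F (- ((real n - 1) / 2 * x))" "w 1 = F (- ((real n - 1) / 2 * x) + x)"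
      unfolding w_def by (simp_all add: algebra_simps)
    then show ?thesis using 1 h0 by (simp add: Tf_def)
  next
    case 2
    have a1: "(real (n - 1) - (real n - 1) / 2) * x = (real n - 1) / 2 * x"
      using n by (simp add: of_nat_diff field_simps)
    have a2: "(real (n - 2) - (real n - 1) / 2) * x = (real n - 1) / 2 * x - x"
      using n by (simp add: of_nat_diff field_simps)
    have "w (n - 1) = F ((real n - 1) / 2 * x)" "w (n - 2) = F ((real n - 1) / 2 * x - x)"
      unfolding w_def a1 a2 by simp_all
    then show ?thesis using 2 hl by (simp add: Tf_def)
  next
    case 3
    define \<theta> where "\<theta> = (real j - (real n - 1) / 2) * x"
    have b1: "(real (j - 1) - (real n - 1) / 2) * x = \<theta> - x"
      unfolding \<theta>_def using 3 by (simp add: of_nat_diff field_simps)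
    have b2: "(real (j + 1) - (real n - 1) / 2) * x = \<theta> + x"
      unfolding \<theta>_def by (simp add: field_simps)
    have "w (j - 1) = F (\<theta> - x)" "w (j + 1) = F (\<theta> + x)" "w j = F \<theta>"
      unfolding w_def b1 b2 \<theta>_def by simp_all
    moreover have "j \<noteq> 0" "j \<noteq> n - 1" using 3 by auto
    ultimately have "Tf n \<rho> w j = - \<rho> * (F (\<theta> - x) + F (\<theta> + x)) + (1 + \<rho>\<^sup>2) * F \<theta>"
      by (simp add: Tf_def algebra_simps)
    also have "\<dots> = \<tau> * w j" unfolding hm tau \<open>w j = F \<theta>\<close> by (simp add: algebra_simps)
    finally show ?thesis .
  qed
qed

lemma eig_hyp:
  fixes x \<rho> :: real
  assumes n: "2 \<le> n" and r: "0 < \<rho>" "\<rho> \<noteq> 1" and x: "0 < x"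
    and P: "cosh (x * (real n + 1) / 2) = \<rho> * cosh (x * (real n - 1) / 2)
          \<or> sinh (x * (real n + 1) / 2) = \<rho> * sinh (x * (real n - 1) / 2)"
  shows "eigenvalue (KMS n \<rho>) ((1 - \<rho>\<^sup>2) / (1 + \<rho>\<^sup>2 - 2 * \<rho> * cosh x))"
proof -
  define \<tau> where "\<tau> = 1 + \<rho>\<^sup>2 - 2 * \<rho> * cosh x"
  define q where "q = (real n - 1) / 2 * x"
  have q0: "q > 0" unfolding q_def using n x by simp
  have qp: "x * (real n + 1) / 2 = q + x" "x * (real n - 1) / 2 = q" unfolding q_def by (simp_all add: field_simps)
  obtain F where F: "F = cosh \<or> F = sinh"
    and PF: "F (q + x) = \<rho> * F q" and Fq: "F q \<noteq> 0"
  proof (cases "cosh (x * (real n + 1) / 2) = \<rho> * cosh (x * (real n - 1) / 2)")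
    case True
    then have "cosh (q + x) = \<rho> * cosh q" unfolding qp .
    then show ?thesis using that[of cosh] by simp
  next
    case False
    then have "sinh (q + x) = \<rho> * sinh q" using P unfolding qp by simp
    then show ?thesis using that[of sinh] q0 by simp
  qed
  have hm: "F (\<theta> - x) + F (\<theta> + x) = 2 * cosh x * F \<theta>" for \<theta>
    using F by (auto simp: cosh_add cosh_diff sinh_add sinh_diff algebra_simps)
  have key: "F q - \<rho> * F (q - x) = \<tau> * F q"
  proof -
    have "F (q - x) = 2 * cosh x * F q - F (q + x)" using hm[of q] by (simp add: eq_diff_eq)
    then have e: "F (q - x) = 2 * cosh x * F q - \<rho> * F q" unfolding PF .
    show ?thesis unfolding e \<tau>_def by (simp add: algebra_simps power2_eq_square)
  qed
  have odd: "F (- y) = (if F = cosh then F y else - F y)" for y using F by auto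
  have h0: "F (- q) - \<rho> * F (- q + x) = \<tau> * F (- q)"
  proof -
    have "- q + x = - (q - x)" by simp
    have m1: "cosh (x - q) = cosh (q - x)" using cosh_minus[of "q - x"] by simp
    have m2: "sinh (x - q) = - sinh (q - x)" using sinh_minus[of "q - x"] by simp
    show ?thesis using key F by (auto simp: algebra_simps m1 m2)
  qed
  have hl: "- \<rho> * F (q - x) + F q = \<tau> * F q" using key by simp
  have T: "\<forall>j<n. Tf n \<rho> (\<lambda>j. F ((real j - (real n - 1) / 2) * x)) j = \<tau> * F ((real j - (real n - 1) / 2) * x)"
    by (rule tev_of[OF n hm _ _ \<tau>_def]) (use h0 hl in \<open>simp_all add: q_def\<close>)
  have t0: "\<tau> \<noteq> 0" unfolding \<tau>_def
  proof -
    show "1 + \<rho>\<^sup>2 - 2 * \<rho> * cosh x \<noteq> 0"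
      using P hyp_lam_c(1)[of x n \<rho>] hyp_lam_s(1)[OF n x, of \<rho>] x by auto
  qed
  have K: "\<forall>j<n. kf n \<rho> (\<lambda>j. F ((real j - (real n - 1) / 2) * x)) j
             = (1 - \<rho>\<^sup>2) / \<tau> * F ((real j - (real n - 1) / 2) * x)"
    by (rule forward[OF n r T t0])
  have nz: "\<exists>j<n. F ((real j - (real n - 1) / 2) * x) \<noteq> 0"
  proof -
    have "F ((real 0 - (real n - 1) / 2) * x) = F (- q)" unfolding q_def by simp
    also have "\<dots> \<noteq> 0" using odd[of q] Fq by auto
    finally show ?thesis using n by (intro exI[of _ 0]) auto
  qed
  show ?thesis unfolding eig_iff \<tau>_def[symmetric]
    by (rule exI[of _ "\<lambda>j. F ((real j - (real n - 1) / 2) * x)"]) (use K nz in simp)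
qed

definition FF :: "nat \<Rightarrow> nat \<Rightarrow> real \<Rightarrow> real" where
  "FF n k \<mu> = cos (\<mu> * (real n + 1) / 2 - real k * pi / 2)"
definition HH :: "nat \<Rightarrow> nat \<Rightarrow> real \<Rightarrow> real" where
  "HH n k \<mu> = cos (\<mu> * (real n - 1) / 2 - real k * pi / 2)"
definition PP :: "nat \<Rightarrow> real \<Rightarrow> nat \<Rightarrow> real \<Rightarrow> bool" where
  "PP n \<rho> k \<mu> = (HH n k \<mu> \<noteq> 0 \<and> FF n k \<mu> = \<rho> * HH n k \<mu>)"

lemma cos_shift:
  "cos (y - real k * pi / 2) = (if even k then (-1) ^ (k div 2) * cos y else (-1) ^ (k div 2) * sin y)"
proof (cases "even k")
  case True
  then obtain m where m: "k = 2 * m" by blast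
  have "real k * pi / 2 = real m * pi" unfolding m by simp
  then show ?thesis using True m by (simp add: cos_diff)
next
  case False
  then obtain m where m: "k = 2 * m + 1" using oddE by blast
  have "y - real k * pi / 2 = (y - real m * pi) - pi / 2" unfolding m by (simp add: field_simps)
  then have "cos (y - real k * pi / 2) = sin (y - real m * pi)"
    by (simp only: cos_diff[of "y - real m * pi" "pi / 2"]) simp
  also have "\<dots> = (-1) ^ m * sin y" by (simp add: sin_diff)
  finally show ?thesis using False m by simp
qed

lemma ct_root_iff:
  assumes "even k"
  shows "ct_root n \<rho> \<mu> \<longleftrightarrow> PP n \<rho> k \<mu>"
proof -
  define s :: real where "s = (-1) ^ (k div 2)"
  have s: "s \<noteq> 0" unfolding s_def by simp
  have "FF n k \<mu> = s * cos (\<mu> * (real n + 1) / 2)" "HH n k \<mu> = s * cos (\<mu> * (real n - 1) / 2)"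
    unfolding FF_def HH_def cos_shift s_def using assms by simp_all
  then show ?thesis unfolding ct_root_def PP_def ct_def using s by (auto simp: field_simps)
qed

lemma st_root_iff:
  assumes "odd k" "\<mu> \<noteq> 0"
  shows "st_root n \<rho> \<mu> \<longleftrightarrow> PP n \<rho> k \<mu>"
proof -
  define s :: real where "s = (-1) ^ (k div 2)"
  have s: "s \<noteq> 0" unfolding s_def by simp
  have "FF n k \<mu> = s * sin (\<mu> * (real n + 1) / 2)" "HH n k \<mu> = s * sin (\<mu> * (real n - 1) / 2)"
    unfolding FF_def HH_def cos_shift s_def using assms by simp_all
  then show ?thesis unfolding st_root_def PP_def st_def using s assms by (auto simp: field_simps)
qed

lemma HH_pos:
  assumes n: "2 \<le> n" and k: "k < n" and a: "alpha n k < \<mu>" and g: "\<mu> \<le> gamma n k"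
  shows "HH n k \<mu> > 0"
proof -
  have n1: "real n - 1 > 0" using n by simp
  have a1: "(real k - 1) * pi < \<mu> * (real n - 1)"
    using a n1 unfolding alpha_def by (simp add: pos_divide_less_eq)
  have g1: "\<mu> * (real n + 1) \<le> (real k + 1) * pi"
    using g unfolding gamma_def by (simp add: pos_le_divide_eq)
  have up: "\<mu> * (real n - 1) < (real k + 1) * pi"
  proof (cases "\<mu> > 0")
    case True
    then have "\<mu> * (real n - 1) < \<mu> * (real n + 1)" by (intro mult_strict_left_mono) auto
    then show ?thesis using g1 by linarith
  next
    case False
    then have "\<mu> * (real n - 1) \<le> 0" using n1 by (intro mult_nonpos_nonneg) auto
    moreover have "(real k + 1) * pi > 0" by simp
    ultimately show ?thesis by linarith
  qed
  show ?thesis unfolding HH_def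
    by (rule cos_gt_zero_pi) (use a1 up in \<open>simp_all add: field_simps\<close>)
qed

lemma sin_minus_kpi: "sin (x - real k * pi) = (-1) ^ k * sin x"
  by (simp add: sin_diff)

lemma sin_cos_ps: "sin P * cos Q = (sin (P + Q) + sin (P - Q)) / 2" for P Q :: real
  by (simp add: sin_add sin_diff)
lemma cos_sin_ps: "cos P * sin Q = (sin (P + Q) - sin (P - Q)) / 2" for P Q :: real
  by (simp add: sin_add sin_diff)

lemma gamma_lt_pi: "k < n \<Longrightarrow> gamma n k < pi"
  unfolding gamma_def by (simp add: pos_divide_less_eq)

lemma R_strict:
  assumes n: "2 \<le> n" and k: "k < n" and a: "alpha n k < \<mu>1" and m0: "0 \<le> \<mu>1"
    and lt: "\<mu>1 < \<mu>2" and g: "\<mu>2 \<le> gamma n k"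
  shows "FF n k \<mu>2 / HH n k \<mu>2 < FF n k \<mu>1 / HH n k \<mu>1"
proof -
  define A where "A z = z * (real n + 1) / 2 - real k * pi / 2" for z
  define B where "B z = z * (real n - 1) / 2 - real k * pi / 2" for z
  have FA: "FF n k z = cos (A z)" and HB: "HH n k z = cos (B z)" for z
    unfolding FF_def HH_def A_def B_def by simp_all
  define f' where "f' z = (- (sin (A z) * ((real n + 1) / 2)) * cos (B z) + cos (A z) * (sin (B z) * ((real n - 1) / 2))) / (cos (B z))\<^sup>2" for z
  have inD: "alpha n k < z \<and> z \<le> gamma n k" if "\<mu>1 \<le> z" "z \<le> \<mu>2" for z using that a g by auto
  have d: "((\<lambda>z. - (cos (A z) / cos (B z))) has_real_derivative - f' z) (at z)" if "\<mu>1 \<le> z" "z \<le> \<mu>2" for z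
  proof -
    have "cos (B z) \<noteq> 0" using HH_pos[OF n k] inD[OF that] HB by (metis order_less_irrefl)
    then show ?thesis unfolding f'_def A_def B_def
      by (auto intro!: derivative_eq_intros simp: power2_eq_square field_simps)
  qed
  have p: "- f' z > 0" if "\<mu>1 < z" "z < \<mu>2" for z
  proof -
    have z: "0 < z" "z < pi" using that m0 g gamma_lt_pi[OF k] by linarith+
    have AB: "A z + B z = real n * z - real k * pi" "A z - B z = z"
      unfolding A_def B_def by (simp_all add: field_simps)
    have num: "- (sin (A z) * ((real n + 1) / 2)) * cos (B z) + cos (A z) * (sin (B z) * ((real n - 1) / 2))
        = - ((-1) ^ k * sin (real n * z) + real n * sin z) / 2"
    proof -
      have "- (sin (A z) * ((real n + 1) / 2)) * cos (B z) + cos (A z) * (sin (B z) * ((real n - 1) / 2))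
          = - ((real n + 1) / 2) * (sin (A z) * cos (B z)) + ((real n - 1) / 2) * (cos (A z) * sin (B z))"
        by (simp add: algebra_simps)
      also have "\<dots> = - (sin (A z + B z) + real n * sin (A z - B z)) / 2"
        unfolding sin_cos_ps cos_sin_ps by (simp add: field_simps)
      finally show ?thesis unfolding AB sin_minus_kpi .
    qed
    have "\<bar>(-1) ^ k * sin (real n * z)\<bar> < real n * sin z"
      using sin_mult_lt[OF z n] by (simp add: abs_mult)
    then have "(-1) ^ k * sin (real n * z) + real n * sin z > 0" by linarith
    then have "- ((-1) ^ k * sin (real n * z) + real n * sin z) / 2 < 0" by simp
    moreover have "cos (B z) \<noteq> 0" using HH_pos[OF n k] inD that HB by (metis less_eq_real_def order_less_irrefl)
    ultimately show ?thesis unfolding f'_def num by (simp add: divide_neg_pos)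
  qed
  have "- (cos (A \<mu>1) / cos (B \<mu>1)) < - (cos (A \<mu>2) / cos (B \<mu>2))"
    by (rule mvt_inc[OF lt d p]) auto
  then show ?thesis unfolding FA HB by simp
qed

lemma R_unique:
  assumes n: "2 \<le> n" and k: "k < n"
    and a1: "alpha n k < \<mu>1" "0 \<le> \<mu>1" "\<mu>1 \<le> gamma n k"
    and a2: "alpha n k < \<mu>2" "0 \<le> \<mu>2" "\<mu>2 \<le> gamma n k"
    and p: "PP n \<rho> k \<mu>1" "PP n \<rho> k \<mu>2"
  shows "\<mu>1 = \<mu>2"
proof -
  have e: "FF n k \<mu>1 / HH n k \<mu>1 = FF n k \<mu>2 / HH n k \<mu>2" using p unfolding PP_def by simp
  show ?thesis
  proof (rule ccontr)
    assume "\<mu>1 \<noteq> \<mu>2"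
    then consider "\<mu>1 < \<mu>2" | "\<mu>2 < \<mu>1" by linarith
    then show False
    proof cases
      case 1 then show False using R_strict[OF n k a1(1,2) 1 a2(3)] e by simp
    next
      case 2 then show False using R_strict[OF n k a2(1,2) 2 a1(3)] e by simp
    qed
  qed
qed

lemma lam_real:
  assumes n: "2 \<le> n" and m: "0 < \<mu>" "\<mu> < pi" and P: "PP n \<rho> k \<mu>"
    and mu: "mu n \<rho> k = complex_of_real \<mu>"
  shows "lam n \<rho> k = sigma \<rho> \<mu>" and "1 - 2 * \<rho> * cos \<mu> + \<rho>\<^sup>2 > 0"
proof -
  define A where "A = \<mu> * (real n + 1) / 2 - real k * pi / 2"
  define B where "B = \<mu> * (real n - 1) / 2 - real k * pi / 2"
  have AB: "A + B = real n * \<mu> - real k * pi" "A - B = \<mu>" unfolding A_def B_def by (simp_all add: field_simps)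
  have PA: "cos A = \<rho> * cos B" and HB: "cos B \<noteq> 0" using P unfolding PP_def FF_def HH_def A_def B_def by auto
  have sm: "sin \<mu> > 0" using m sin_gt_zero by blast
  have t: "(1 - 2 * \<rho> * cos \<mu> + \<rho>\<^sup>2) * (cos B)\<^sup>2 = (sin \<mu>)\<^sup>2"
  proof -
    have "(1 - 2 * \<rho> * cos \<mu> + \<rho>\<^sup>2) * (cos B)\<^sup>2 = (cos A)\<^sup>2 + (cos B)\<^sup>2 - 2 * cos A * cos B * cos (A - B)"
      unfolding AB(2) PA by (simp add: algebra_simps power2_eq_square)
    also have "\<dots> = (sin \<mu>)\<^sup>2" using trig_id2[of A B] unfolding AB(2) .
    finally show ?thesis .
  qed
  have u: "(1 - \<rho>\<^sup>2) * (cos B)\<^sup>2 = (-1) ^ k * sin (real n * \<mu>) * sin \<mu>"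
  proof -
    have "(1 - \<rho>\<^sup>2) * (cos B)\<^sup>2 = (cos B)\<^sup>2 - (cos A)\<^sup>2"
      unfolding PA by (simp add: algebra_simps power2_eq_square)
    also have "\<dots> = (-1) ^ k * sin (real n * \<mu>) * sin \<mu>"
      using trig_id1[of B A] unfolding AB sin_minus_kpi by (simp add: algebra_simps)
    finally show ?thesis .
  qed
  have cb: "(cos B)\<^sup>2 > 0" using HB by simp
  have "(sin \<mu>)\<^sup>2 > 0" using sm by simp
  then have "(1 - 2 * \<rho> * cos \<mu> + \<rho>\<^sup>2) * (cos B)\<^sup>2 > 0" unfolding t .
  then show pos: "1 - 2 * \<rho> * cos \<mu> + \<rho>\<^sup>2 > 0" using cb by (simp add: zero_less_mult_iff)
  have "sigma \<rho> \<mu> = ((1 - \<rho>\<^sup>2) * (cos B)\<^sup>2) / ((1 - 2 * \<rho> * cos \<mu> + \<rho>\<^sup>2) * (cos B)\<^sup>2)"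
    unfolding sigma_def using cb by simp
  also have "\<dots> = (-1) ^ k * (sin (real n * \<mu>) / sin \<mu>)" unfolding t u using sm by (simp add: power2_eq_square)
  finally have sg: "sigma \<rho> \<mu> = (-1) ^ k * (sin (real n * \<mu>) / sin \<mu>)" .
  have "sin (complex_of_real \<mu>) \<noteq> 0" using sm by (simp add: sin_of_real)
  then have "dirichlet_ratio n (complex_of_real \<mu>) = complex_of_real (sin (real n * \<mu>) / sin \<mu>)"
    unfolding dirichlet_ratio_def
    by (simp add: sin_of_real[symmetric])
  then show "lam n \<rho> k = sigma \<rho> \<mu>" unfolding lam_def mu sg by simp
qed

lemma abg:
  assumes n: "2 \<le> n" and k: "k < n"
  shows "alpha n k < beta n k" "beta n k \<le> gamma n k" "beta n k < gamma n k" "0 \<le> beta n k"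
    "1 \<le> k \<Longrightarrow> 0 \<le> alpha n k" "1 \<le> k \<Longrightarrow> 0 < beta n k"
proof -
  have n1: "real n - 1 > 0" using n by simp
  have n0: "real n > 0" using n by simp
  have kn: "real k < real n" using k by simp
  have "(real k - 1) * real n < real k * (real n - 1)" using kn by (simp add: algebra_simps)
  then have "(real k - 1) / (real n - 1) < real k / real n" using n1 n0 by (simp add: field_simps)
  then have lt: "(real k - 1) / (real n - 1) * pi < real k / real n * pi" by (rule mult_strict_right_mono) simp
  have e: "(real k - 1) * pi / (real n - 1) = (real k - 1) / (real n - 1) * pi"
    "real k * pi / real n = real k / real n * pi" by simp_all
  show "alpha n k < beta n k" unfolding alpha_def beta_def e by (rule lt)
  have "real k * (real n + 1) < (real k + 1) * real n" using kn by (simp add: algebra_simps)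
  then have "real k / real n < (real k + 1) / (real n + 1)" using n0 by (simp add: field_simps)
  then have lt2: "real k / real n * pi < (real k + 1) / (real n + 1) * pi" by (rule mult_strict_right_mono) simp
  have e2: "(real k + 1) * pi / (real n + 1) = (real k + 1) / (real n + 1) * pi"
    "real k * pi / real n = real k / real n * pi" by simp_all
  show "beta n k < gamma n k" unfolding gamma_def beta_def e2 by (rule lt2)
  then show "beta n k \<le> gamma n k" by simp
  show "0 \<le> beta n k" unfolding beta_def by simp
  show "1 \<le> k \<Longrightarrow> 0 \<le> alpha n k" unfolding alpha_def using n1 by simp
  show "1 \<le> k \<Longrightarrow> 0 < beta n k" unfolding beta_def using n0 by simp
qed

lemma at_beta:
  assumes n: "2 \<le> n" and k: "k < n"
  shows "FF n k (beta n k) = cos (real k * pi / (2 * real n))" "HH n k (beta n k) = cos (real k * pi / (2 * real n))"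
    "cos (real k * pi / (2 * real n)) > 0"
proof -
  have n0: "real n > 0" using n by simp
  have "beta n k * (real n + 1) / 2 - real k * pi / 2 = real k * pi / (2 * real n)"
    unfolding beta_def using n0 by (simp add: field_simps)
  then show "FF n k (beta n k) = cos (real k * pi / (2 * real n))" unfolding FF_def by simp
  have "beta n k * (real n - 1) / 2 - real k * pi / 2 = - (real k * pi / (2 * real n))"
    unfolding beta_def using n0 by (simp add: field_simps)
  then show "HH n k (beta n k) = cos (real k * pi / (2 * real n))" unfolding HH_def by simp
  have "real k * pi / (2 * real n) < pi / 2"
    using k n0 by (simp add: field_simps)
  moreover have "real k * pi / (2 * real n) \<ge> 0" by simp
  ultimately show "cos (real k * pi / (2 * real n)) > 0" using pi_gt_zero by (intro cos_gt_zero_pi) linarith+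
qed

lemma FF_gamma: assumes n: "2 \<le> n" shows "FF n k (gamma n k) = 0"
proof -
  have "gamma n k * (real n + 1) / 2 - real k * pi / 2 = pi / 2"
    unfolding gamma_def by (simp add: field_simps)
  then show ?thesis unfolding FF_def by (simp only:) simp
qed

lemma at_alpha:
  assumes n: "2 \<le> n" and k: "2 \<le> k" "k < n"
  shows "HH n k (alpha n k) = 0" "FF n k (alpha n k) > 0"
proof -
  have n1: "real n - 1 > 0" using n by simp
  have "alpha n k * (real n - 1) / 2 - real k * pi / 2 = - (pi / 2)"
    unfolding alpha_def using n1 by (simp add: field_simps)
  then show "HH n k (alpha n k) = 0" unfolding HH_def by simp
  define y where "y = (real k - 1) * pi / (real n - 1)"
  have "alpha n k * (real n + 1) / 2 - real k * pi / 2 = y - pi / 2"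
    unfolding alpha_def y_def using n1 by (simp add: field_simps)
  then have "FF n k (alpha n k) = sin y" unfolding FF_def by (simp add: cos_diff)
  moreover have "0 < y" "y < pi" unfolding y_def using k n1 by (simp_all add: field_simps)
  ultimately show "FF n k (alpha n k) > 0" using sin_gt_zero by simp
qed

lemma G_cont: "continuous_on S (\<lambda>z. FF n k z - \<rho> * HH n k z)"
  unfolding FF_def HH_def by (intro continuous_intros) auto

lemma exist_low:
  assumes n: "2 \<le> n" and k: "k < n" and r: "0 \<le> \<rho>" "\<rho> \<le> 1"
  shows "\<exists>\<mu>. beta n k \<le> \<mu> \<and> \<mu> \<le> gamma n k \<and> PP n \<rho> k \<mu>"
proof -
  note B = abg[OF n k]
  note AB = at_beta[OF n k]
  have Hg: "HH n k (gamma n k) > 0" using HH_pos[OF n k] B by simp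
  have g1: "FF n k (gamma n k) - \<rho> * HH n k (gamma n k) \<le> 0" using FF_gamma[OF n] Hg r by simp
  have g2: "0 \<le> FF n k (beta n k) - \<rho> * HH n k (beta n k)" unfolding AB(1,2) using AB(3) r
    by (simp add: mult_le_cancel_right1)
  from IVT2'[of "\<lambda>z. FF n k z - \<rho> * HH n k z", OF g1 g2 B(2) G_cont]
  obtain \<mu> where m: "beta n k \<le> \<mu>" "\<mu> \<le> gamma n k" "FF n k \<mu> - \<rho> * HH n k \<mu> = 0" by blast
  have "HH n k \<mu> > 0" using HH_pos[OF n k] m B by simp
  then show ?thesis using m unfolding PP_def by (intro exI[of _ \<mu>]) auto
qed

lemma exist_high:
  assumes n: "2 \<le> n" and k: "2 \<le> k" "k < n" and r: "1 \<le> \<rho>"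
  shows "\<exists>\<mu>. alpha n k < \<mu> \<and> \<mu> \<le> beta n k \<and> PP n \<rho> k \<mu>"
proof -
  note B = abg[OF n k(2)]
  note AB = at_beta[OF n k(2)]
  note AA = at_alpha[OF n k]
  have g1: "FF n k (beta n k) - \<rho> * HH n k (beta n k) \<le> 0" unfolding AB(1,2) using AB(3) r
    by (simp add: mult_le_cancel_right1)
  have g2: "0 \<le> FF n k (alpha n k) - \<rho> * HH n k (alpha n k)" using AA by simp
  from IVT2'[of "\<lambda>z. FF n k z - \<rho> * HH n k z", OF g1 g2 _ G_cont] B(1)
  obtain \<mu> where m: "alpha n k \<le> \<mu>" "\<mu> \<le> beta n k" "FF n k \<mu> - \<rho> * HH n k \<mu> = 0" by force
  have "\<mu> \<noteq> alpha n k" using m(3) AA by auto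
  with m have m1: "alpha n k < \<mu>" by simp
  have "HH n k \<mu> > 0" using HH_pos[OF n k(2)] m1 m B by simp
  then show ?thesis using m m1 unfolding PP_def by (intro exI[of _ \<mu>]) auto
qed

lemma exist_one:
  assumes n: "2 \<le> n" and r: "1 \<le> \<rho>" "\<rho> < xi n"
  shows "\<exists>\<mu>. 0 < \<mu> \<and> \<mu> \<le> beta n 1 \<and> PP n \<rho> 1 \<mu>"
proof -
  have k: "1 < n" using n by simp
  note B = abg[OF n k]
  note AB = at_beta[OF n k]
  define G where "G z = FF n 1 z - \<rho> * HH n 1 z" for z
  have n1: "real n - 1 > 0" using n by simp
  have l: "(real n + 1) / 2 - \<rho> * ((real n - 1) / 2) > 0"
    using r(2) n1 unfolding xi_def by (simp add: field_simps)
  have dG: "(G has_real_derivative ((real n + 1) / 2 - \<rho> * ((real n - 1) / 2))) (at 0)"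
    unfolding G_def FF_def HH_def by (auto intro!: derivative_eq_intros simp: field_simps)
  obtain d where d: "d > 0" "\<forall>h>0. h < d \<longrightarrow> G 0 < G (0 + h)"
    using DERIV_pos_inc_right[OF dG l] by blast
  have G0: "G 0 = 0" unfolding G_def FF_def HH_def by simp
  define h where "h = min (d / 2) (beta n 1)"
  have h: "0 < h" "h < d" "h \<le> beta n 1" unfolding h_def using d B(6) by auto
  have gh: "0 \<le> G h" using d(2) h G0 by fastforce
  have gb: "G (beta n 1) \<le> 0" unfolding G_def AB(1,2) using AB(3) r
    by (simp add: mult_le_cancel_right1)
  from IVT2'[of G, OF gb gh h(3)] G_cont obtain \<mu> where m: "h \<le> \<mu>" "\<mu> \<le> beta n 1" "G \<mu> = 0"
    unfolding G_def by blast
  have m0: "0 < \<mu>" using m h by simp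
  have "HH n 1 \<mu> > 0" using HH_pos[OF n k] m0 m B unfolding alpha_def by simp
  then show ?thesis using m m0 unfolding PP_def G_def by (intro exI[of _ \<mu>]) auto
qed

lemma mu_low:
  assumes n: "2 \<le> n" and k: "k < n" and r: "0 \<le> \<rho>" "\<rho> < 1"
  shows "\<exists>\<mu>. mu n \<rho> k = complex_of_real \<mu> \<and> beta n k \<le> \<mu> \<and> \<mu> \<le> gamma n k \<and> 0 < \<mu> \<and> PP n \<rho> k \<mu>"
proof -
  define root where "root m = (if even k then ct_root n \<rho> m else st_root n \<rho> m)" for m
  have b0: "beta n 0 = 0" unfolding beta_def by simp
  have mu_eq: "mu n \<rho> k = complex_of_real (THE m. beta n k \<le> m \<and> m \<le> gamma n k \<and> root m)"
  proof -
    have "xi n > 1" unfolding xi_def using n by (simp add: field_simps)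
    then show ?thesis
      using r unfolding mu_def root_def by (cases "k = 0"; cases "k = 1") (auto simp: b0)
  qed
  note B = abg[OF n k]
  have iff: "root m \<longleftrightarrow> PP n \<rho> k m" if "beta n k \<le> m" for m
  proof (cases "even k")
    case True then show ?thesis unfolding root_def using ct_root_iff by simp
  next
    case False
    then have "1 \<le> k" by (cases k) auto
    then have "m \<noteq> 0" using B(6) that by auto
    then show ?thesis unfolding root_def using st_root_iff False by simp
  qed
  obtain \<mu> where m: "beta n k \<le> \<mu>" "\<mu> \<le> gamma n k" "PP n \<rho> k \<mu>" using exist_low[OF n k r(1)] r(2) by auto
  have the: "(THE m. beta n k \<le> m \<and> m \<le> gamma n k \<and> root m) = \<mu>"
  proof (rule the_equality)
    show "beta n k \<le> \<mu> \<and> \<mu> \<le> gamma n k \<and> root \<mu>" using m iff by simp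
    fix m' assume m': "beta n k \<le> m' \<and> m' \<le> gamma n k \<and> root m'"
    then have "PP n \<rho> k m'" using iff[of m'] by simp
    then show "m' = \<mu>" using R_unique[OF n k, of m' \<mu> \<rho>] m m' B by auto
  qed
  have pos: "0 < \<mu>"
  proof (rule ccontr)
    assume "\<not> 0 < \<mu>"
    then have "\<mu> = 0" using m B by simp
    then have "k = 0" using m(1) B(6) by (cases k) auto
    then show False using m(3) \<open>\<mu> = 0\<close> r unfolding PP_def FF_def HH_def by simp
  qed
  show ?thesis using mu_eq the m pos by auto
qed

lemma mu_high:
  assumes n: "2 \<le> n" and k: "2 \<le> k" "k < n" and r: "1 \<le> \<rho>"
  shows "\<exists>\<mu>. mu n \<rho> k = complex_of_real \<mu> \<and> alpha n k < \<mu> \<and> \<mu> \<le> beta n k \<and> PP n \<rho> k \<mu>"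
proof -
  define root where "root m = (if even k then ct_root n \<rho> m else st_root n \<rho> m)" for m
  have mu_eq: "mu n \<rho> k = complex_of_real (THE m. alpha n k < m \<and> m \<le> beta n k \<and> root m)"
    using r k unfolding mu_def root_def by auto
  note B = abg[OF n k(2)]
  have a0: "0 \<le> alpha n k" using B k by simp
  have iff: "root m \<longleftrightarrow> PP n \<rho> k m" if "alpha n k < m" for m
  proof (cases "even k")
    case True then show ?thesis unfolding root_def using ct_root_iff by simp
  next
    case False
    have "m \<noteq> 0" using a0 that by auto
    then show ?thesis unfolding root_def using st_root_iff False by simp
  qed
  obtain \<mu> where m: "alpha n k < \<mu>" "\<mu> \<le> beta n k" "PP n \<rho> k \<mu>" using exist_high[OF n k r] by auto
  have the: "(THE m. alpha n k < m \<and> m \<le> beta n k \<and> root m) = \<mu>"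
  proof (rule the_equality)
    show "alpha n k < \<mu> \<and> \<mu> \<le> beta n k \<and> root \<mu>" using m iff by simp
    fix m' assume m': "alpha n k < m' \<and> m' \<le> beta n k \<and> root m'"
    then have "PP n \<rho> k m'" using iff[of m'] by simp
    then show "m' = \<mu>" using R_unique[OF n k(2), of m' \<mu> \<rho>] m m' B a0 by auto
  qed
  show ?thesis using mu_eq the m by auto
qed

lemma mu_one:
  assumes n: "2 \<le> n" and r: "1 \<le> \<rho>" "\<rho> < xi n"
  shows "\<exists>\<mu>. mu n \<rho> 1 = complex_of_real \<mu> \<and> 0 < \<mu> \<and> \<mu> \<le> beta n 1 \<and> PP n \<rho> 1 \<mu>"
proof -
  have k: "1 < n" using n by simp
  have mu_eq: "mu n \<rho> 1 = complex_of_real (THE m. 0 \<le> m \<and> m \<le> beta n 1 \<and> st_root n \<rho> m)"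
    using r unfolding mu_def by auto
  note B = abg[OF n k]
  have iff: "st_root n \<rho> m \<longleftrightarrow> 0 < m \<and> PP n \<rho> 1 m" if "0 \<le> m" for m
  proof (cases "m = 0")
    case True
    then show ?thesis using r unfolding st_root_def st_def xi_def by auto
  next
    case False
    then show ?thesis using st_root_iff[of 1 m n \<rho>] that by simp
  qed
  obtain \<mu> where m: "0 < \<mu>" "\<mu> \<le> beta n 1" "PP n \<rho> 1 \<mu>" using exist_one[OF n r] by auto
  have a1: "alpha n 1 = 0" unfolding alpha_def by simp
  have the: "(THE m. 0 \<le> m \<and> m \<le> beta n 1 \<and> st_root n \<rho> m) = \<mu>"
  proof (rule the_equality)
    show "0 \<le> \<mu> \<and> \<mu> \<le> beta n 1 \<and> st_root n \<rho> \<mu>" using m iff by simp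
    fix m' assume m': "0 \<le> m' \<and> m' \<le> beta n 1 \<and> st_root n \<rho> m'"
    then have "0 < m'" "PP n \<rho> 1 m'" using iff by auto
    then show "m' = \<mu>" using R_unique[OF n k, of m' \<mu> \<rho>] m m' B a1 by auto
  qed
  show ?thesis using mu_eq the m by auto
qed

lemma sig_den_ge: "(\<rho> - 1)\<^sup>2 \<le> 1 - 2 * \<rho> * cos \<theta> + \<rho>\<^sup>2" if "0 \<le> \<rho>" for \<rho> \<theta> :: real
proof -
  have "\<rho> * cos \<theta> \<le> \<rho> * 1" using that by (intro mult_left_mono) auto
  then show ?thesis by (simp add: power2_eq_square algebra_simps)
qed

lemma sig_mono:
  fixes \<rho> :: real
  assumes r: "0 < \<rho>" "\<rho> \<noteq> 1" and t: "0 \<le> \<theta>1" "\<theta>1 < \<theta>2" "\<theta>2 \<le> pi"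
  shows "\<rho> > 1 \<Longrightarrow> sigma \<rho> \<theta>1 < sigma \<rho> \<theta>2" and "\<rho> < 1 \<Longrightarrow> sigma \<rho> \<theta>2 < sigma \<rho> \<theta>1"
proof -
  define D1 where "D1 = 1 - 2 * \<rho> * cos \<theta>1 + \<rho>\<^sup>2"
  define D2 where "D2 = 1 - 2 * \<rho> * cos \<theta>2 + \<rho>\<^sup>2"
  have c: "cos \<theta>2 < cos \<theta>1" using cos_monotone_0_pi[OF t] .
  have D: "D1 < D2" unfolding D1_def D2_def using c r by simp
  have rr: "(\<rho> - 1)\<^sup>2 > 0" using r by simp
  have D1p: "D1 > 0" unfolding D1_def using sig_den_ge[of \<rho> \<theta>1] r rr by linarith
  have D12: "0 < D1 * D2" using D1p D by simp
  show "\<rho> > 1 \<Longrightarrow> sigma \<rho> \<theta>1 < sigma \<rho> \<theta>2"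
  proof -
    assume "\<rho> > 1"
    then have "1 < \<rho>\<^sup>2" by (intro one_less_power) auto
    then have "1 - \<rho>\<^sup>2 < 0" by simp
    then show ?thesis unfolding sigma_def D1_def[symmetric] D2_def[symmetric]
      by (rule divide_strict_left_mono_neg[OF D _ D12])
  qed
  show "\<rho> < 1 \<Longrightarrow> sigma \<rho> \<theta>2 < sigma \<rho> \<theta>1"
  proof -
    assume "\<rho> < 1"
    then have "\<rho>\<^sup>2 < 1" using r abs_square_less_1[of \<rho>] by simp
    then have "0 < 1 - \<rho>\<^sup>2" by simp
    then show ?thesis unfolding sigma_def D1_def[symmetric] D2_def[symmetric]
      by (rule divide_strict_left_mono[OF D _]) (use D12 in \<open>simp add: mult.commute\<close>)
  qed
qed

lemma sig_0: "\<rho> \<noteq> 1 \<Longrightarrow> sigma \<rho> 0 = (1 + \<rho>) / (1 - \<rho>)"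
proof -
  assume r: "\<rho> \<noteq> 1"
  have d: "1 - 2 * \<rho> * cos 0 + \<rho>\<^sup>2 = (1 - \<rho>) * (1 - \<rho>)" by (simp add: power2_eq_square algebra_simps)
  have u: "1 - \<rho>\<^sup>2 = (1 - \<rho>) * (1 + \<rho>)" by (simp add: power2_eq_square algebra_simps)
  have "1 - \<rho> \<noteq> 0" using r by simp
  then show ?thesis unfolding sigma_def d u by (rule mult_divide_mult_cancel_left)
qed

lemma sig_pi: "0 \<le> \<rho> \<Longrightarrow> sigma \<rho> pi = (1 - \<rho>) / (1 + \<rho>)"
proof -
  assume r: "0 \<le> \<rho>"
  have d: "1 - 2 * \<rho> * cos pi + \<rho>\<^sup>2 = (1 + \<rho>) * (1 + \<rho>)" by (simp add: power2_eq_square algebra_simps)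
  have u: "1 - \<rho>\<^sup>2 = (1 + \<rho>) * (1 - \<rho>)" by (simp add: power2_eq_square algebra_simps)
  have "1 + \<rho> \<noteq> 0" using r by simp
  then show ?thesis unfolding sigma_def d u by (rule mult_divide_mult_cancel_left)
qed

lemma sig_range:
  fixes \<rho> :: real
  assumes r: "1 < \<rho>"
  shows "sigma \<rho> \<theta> < 0" "- (\<rho> + 1) / (\<rho> - 1) \<le> sigma \<rho> \<theta>"
proof -
  have D: "(\<rho> - 1)\<^sup>2 \<le> 1 - 2 * \<rho> * cos \<theta> + \<rho>\<^sup>2" using sig_den_ge r by simp
  have rr: "(\<rho> - 1)\<^sup>2 > 0" using r by simp
  have "1 < \<rho>\<^sup>2" using r by (intro one_less_power) auto
  then have N: "1 - \<rho>\<^sup>2 < 0" by simp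
  have Dp: "1 - 2 * \<rho> * cos \<theta> + \<rho>\<^sup>2 > 0" using D rr by linarith
  show "sigma \<rho> \<theta> < 0" unfolding sigma_def by (rule divide_neg_pos[OF N Dp])
  have "(1 - \<rho>\<^sup>2) / (\<rho> - 1)\<^sup>2 \<le> (1 - \<rho>\<^sup>2) / (1 - 2 * \<rho> * cos \<theta> + \<rho>\<^sup>2)"
    using D rr N Dp by (intro divide_left_mono_neg) auto
  moreover have "(1 - \<rho>\<^sup>2) / (\<rho> - 1)\<^sup>2 = - (\<rho> + 1) / (\<rho> - 1)"
  proof -
    have d: "(\<rho> - 1)\<^sup>2 = (\<rho> - 1) * (\<rho> - 1)" by (simp add: power2_eq_square)
    have u: "1 - \<rho>\<^sup>2 = (\<rho> - 1) * (- (\<rho> + 1))" by (simp add: power2_eq_square algebra_simps)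
    have "\<rho> - 1 \<noteq> 0" using r by simp
    then show ?thesis unfolding d u by (rule mult_divide_mult_cancel_left)
  qed
  ultimately show "- (\<rho> + 1) / (\<rho> - 1) \<le> sigma \<rho> \<theta>" unfolding sigma_def by simp
qed

lemma ch_iff: "ch n t = \<rho> \<longleftrightarrow> cosh (t * (real n + 1) / 2) = \<rho> * cosh (t * (real n - 1) / 2)"
  unfolding ch_def by (auto simp: field_simps)

lemma sh_iff:
  assumes "2 \<le> n" "t \<noteq> 0"
  shows "sh n t = \<rho> \<longleftrightarrow> sinh (t * (real n + 1) / 2) = \<rho> * sinh (t * (real n - 1) / 2)"
proof -
  have "sinh (t * (real n - 1) / 2) \<noteq> 0" using assms by simp
  then show ?thesis unfolding sh_def using assms by (auto simp: field_simps)
qed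

lemma gb: "2 \<le> n \<Longrightarrow> gamma n k < beta n (k + 1)"
proof -
  assume n: "2 \<le> n"
  have "(real k + 1) * pi / (real n + 1) < (real k + 1) * pi / real n"
    by (rule divide_strict_left_mono) (use n in auto)
  then show ?thesis unfolding gamma_def beta_def by (simp add: add.commute)
qed

lemma ba: "2 \<le> n \<Longrightarrow> 1 \<le> k \<Longrightarrow> beta n k < alpha n (k + 1)"
  unfolding alpha_def beta_def by (simp add: field_simps)

lemma beta_lt_pi: "k < n \<Longrightarrow> beta n k < pi"
  unfolding beta_def by (simp add: field_simps)

lemma lam0_big:
  assumes n: "2 \<le> n" and r: "1 < \<rho>"
  shows "\<exists>x0>0. ch n x0 = \<rho> \<and> lam n \<rho> 0 = sinh (real n * x0) / sinh x0 \<and> real n < lam n \<rho> 0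
      \<and> lam n \<rho> 0 = (1 - \<rho>\<^sup>2) / (1 + \<rho>\<^sup>2 - 2 * \<rho> * cosh x0)
      \<and> (\<forall>y\<ge>0. ch n y = \<rho> \<longrightarrow> y = x0)"
proof -
  obtain x0 where x: "0 \<le> x0" "ch n x0 = \<rho>" "mu n \<rho> 0 = \<i> * complex_of_real x0" using mu0_hyp[OF n less_imp_le[OF r]] by blast
  have x0: "x0 \<noteq> 0" using x r unfolding ch_def by auto
  then have xp: "x0 > 0" using x by simp
  have l: "lam n \<rho> 0 = sinh (real n * x0) / sinh x0" using lam_hyp[OF x(3)] x0 by simp
  have "sinh (real n * x0) > real n * sinh x0" using sinh_mult_gt[OF xp n] .
  then have big: "real n < lam n \<rho> 0" unfolding l using xp by (simp add: field_simps)
  have e: "lam n \<rho> 0 = (1 - \<rho>\<^sup>2) / (1 + \<rho>\<^sup>2 - 2 * \<rho> * cosh x0)"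
    unfolding l using hyp_lam_c(2)[OF x0, of n \<rho>] x(2) unfolding ch_iff by simp
  show ?thesis using xp x l big e ch_unique[OF n] by blast
qed

lemma theta_low:
  assumes n: "2 \<le> n" and r: "0 \<le> \<rho>" "\<rho> < 1"
  shows "\<exists>\<theta>. \<forall>k<n. lam n \<rho> k = sigma \<rho> (\<theta> k) \<and> beta n k \<le> \<theta> k \<and> \<theta> k \<le> gamma n k \<and> 0 < \<theta> k \<and> \<theta> k < pi"
proof -
  have "\<forall>k. \<exists>t. k < n \<longrightarrow> lam n \<rho> k = sigma \<rho> t \<and> beta n k \<le> t \<and> t \<le> gamma n k \<and> 0 < t \<and> t < pi"
  proof
    fix k
    show "\<exists>t. k < n \<longrightarrow> lam n \<rho> k = sigma \<rho> t \<and> beta n k \<le> t \<and> t \<le> gamma n k \<and> 0 < t \<and> t < pi"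
    proof (cases "k < n")
      case True
      obtain \<mu> where m: "mu n \<rho> k = complex_of_real \<mu>" "beta n k \<le> \<mu>" "\<mu> \<le> gamma n k" "0 < \<mu>" "PP n \<rho> k \<mu>"
        using mu_low[OF n True r] by blast
      have "\<mu> < pi" using m(3) gamma_lt_pi[OF True] by simp
      then show ?thesis using lam_real(1)[OF n m(4) _ m(5) m(1)] m by blast
    qed simp
  qed
  then show ?thesis by (metis (no_types))
qed

lemma theta_high:
  assumes n: "2 \<le> n" and r: "1 \<le> \<rho>"
  shows "\<exists>\<theta>. \<forall>k. 2 \<le> k \<and> k < n \<longrightarrow> lam n \<rho> k = sigma \<rho> (\<theta> k) \<and> alpha n k < \<theta> k \<and> \<theta> k \<le> beta n k"
proof -
  have "\<forall>k. \<exists>t. 2 \<le> k \<and> k < n \<longrightarrow> lam n \<rho> k = sigma \<rho> t \<and> alpha n k < t \<and> t \<le> beta n k"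
  proof
    fix k
    show "\<exists>t. 2 \<le> k \<and> k < n \<longrightarrow> lam n \<rho> k = sigma \<rho> t \<and> alpha n k < t \<and> t \<le> beta n k"
    proof (cases "2 \<le> k \<and> k < n")
      case True
      obtain \<mu> where m: "mu n \<rho> k = complex_of_real \<mu>" "alpha n k < \<mu>" "\<mu> \<le> beta n k" "PP n \<rho> k \<mu>"
        using mu_high[OF n _ _ r] True by blast
      have "0 \<le> alpha n k" using abg(5)[OF n] True by simp
      then have "0 < \<mu>" using m by simp
      moreover have "\<mu> < pi" using m(3) beta_lt_pi True by (meson le_less_trans)
      ultimately show ?thesis using lam_real(1)[OF n _ _ m(4) m(1)] m by blast
    next
      case False then show ?thesis by blast
    qed
  qed
  then show ?thesis by (metis (no_types))
qed

lemma theta_one: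
  assumes n: "2 \<le> n" and r: "1 \<le> \<rho>" "\<rho> < xi n"
  shows "\<exists>t. lam n \<rho> 1 = sigma \<rho> t \<and> 0 < t \<and> t \<le> beta n 1"
proof -
  obtain \<mu> where m: "mu n \<rho> 1 = complex_of_real \<mu>" "0 < \<mu>" "\<mu> \<le> beta n 1" "PP n \<rho> 1 \<mu>"
    using mu_one[OF n r] by blast
  have "\<mu> < pi" using m(3) beta_lt_pi[of 1 n] n by simp
  then show ?thesis using lam_real(1)[OF n m(2) _ m(4) m(1)] m by blast
qed

lemma xi_gt1: "2 \<le> n \<Longrightarrow> 1 < xi n"
  unfolding xi_def by (simp add: field_simps)

lemma lam1_xi:
  assumes n: "2 \<le> n" and r: "\<rho> = xi n"
  shows "lam n \<rho> 1 = - real n" "lam n \<rho> 1 = sigma \<rho> 0"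
proof -
  obtain x where x: "0 \<le> x" "sh n x = \<rho>" "mu n \<rho> 1 = \<i> * complex_of_real x" using mu1_hyp[OF n] r by auto
  have "sh n 0 = \<rho>" unfolding sh_def r xi_def by simp
  then have "x = 0" using sh_unique[OF n x(1) _] x(2) by simp
  then show l: "lam n \<rho> 1 = - real n" using lam_hyp[OF x(3)] by simp
  have n1: "real n - 1 > 0" using n by simp
  have "sigma \<rho> 0 = (1 + \<rho>) / (1 - \<rho>)" using sig_0 xi_gt1[OF n] r by simp
  also have "\<dots> = - real n" unfolding r xi_def using n1 by (simp add: field_simps)
  finally show "lam n \<rho> 1 = sigma \<rho> 0" using l by simp
qed

lemma lam1_big:
  assumes n: "2 \<le> n" and r: "xi n < \<rho>"
  shows "\<exists>x1>0. sh n x1 = \<rho> \<and> lam n \<rho> 1 < - real n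
      \<and> lam n \<rho> 1 = (1 - \<rho>\<^sup>2) / (1 + \<rho>\<^sup>2 - 2 * \<rho> * cosh x1)
      \<and> (\<forall>y\<ge>0. sh n y = \<rho> \<longrightarrow> y = x1)"
proof -
  obtain x where x: "0 \<le> x" "sh n x = \<rho>" "mu n \<rho> 1 = \<i> * complex_of_real x"
    using mu1_hyp[OF n less_imp_le[OF r]] by blast
  have x0: "x \<noteq> 0" using x r unfolding sh_def xi_def by auto
  then have xp: "x > 0" using x by simp
  have l: "lam n \<rho> 1 = - (sinh (real n * x) / sinh x)" using lam_hyp[OF x(3)] x0 by simp
  have "sinh (real n * x) > real n * sinh x" using sinh_mult_gt[OF xp n] .
  then have big: "lam n \<rho> 1 < - real n" unfolding l using xp by (simp add: field_simps)
  have e: "lam n \<rho> 1 = (1 - \<rho>\<^sup>2) / (1 + \<rho>\<^sup>2 - 2 * \<rho> * cosh x)"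
    unfolding l using hyp_lam_s(2)[OF n xp, of \<rho>] x(2) sh_iff[OF n x0] by simp
  show ?thesis using xp x big e sh_unique[OF n] by blast
qed

lemma not_ord_big:
  assumes r: "1 < \<rho>" and l: "0 < y \<or> y < - (\<rho> + 1) / (\<rho> - 1)"
  shows "extraordinary \<rho> y"
  unfolding extraordinary_def ordinary_def
proof
  assume "\<rho> \<in> {0, 1, -1} \<or> y \<in> {sigma \<rho> \<theta> |\<theta>. - pi < \<theta> \<and> \<theta> \<le> pi}"
  then obtain \<theta> where "y = sigma \<rho> \<theta>" using r by auto
  then show False using sig_range[OF r, of \<theta>] l by auto
qed

lemma set_big:
  assumes n: "2 \<le> n" and r: "1 < \<rho>"
  shows "{x. eigenvalue (KMS n \<rho>) x \<and> extraordinary \<rho> x}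
        = (if xi n < \<rho> then {lam n \<rho> 0, lam n \<rho> 1} else {lam n \<rho> 0})"
proof -
  have r0: "0 < \<rho>" "\<rho> \<noteq> 1" using r by auto
  obtain x0 where x0: "x0 > 0" "ch n x0 = \<rho>" "real n < lam n \<rho> 0"
      "lam n \<rho> 0 = (1 - \<rho>\<^sup>2) / (1 + \<rho>\<^sup>2 - 2 * \<rho> * cosh x0)" "\<forall>y\<ge>0. ch n y = \<rho> \<longrightarrow> y = x0"
    using lam0_big[OF n r] by blast
  have ev0: "eigenvalue (KMS n \<rho>) (lam n \<rho> 0)"
    unfolding x0(4) using eig_hyp[OF n r0 x0(1)] x0(2) unfolding ch_iff by blast
  have "0 < lam n \<rho> 0" using x0(3) n by linarith
  then have ex0: "extraordinary \<rho> (lam n \<rho> 0)" using not_ord_big[OF r] by blast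
  have sub: "x = lam n \<rho> 0 \<or> (xi n < \<rho> \<and> x = lam n \<rho> 1)"
    if ev: "eigenvalue (KMS n \<rho>) x" and ex: "extraordinary \<rho> x" for x
  proof -
    obtain t where t: "t > 0" and dis: "cosh (t * (real n + 1) / 2) = \<rho> * cosh (t * (real n - 1) / 2)
               \<or> sinh (t * (real n + 1) / 2) = \<rho> * sinh (t * (real n - 1) / 2)"
      and xe: "x = (1 - \<rho>\<^sup>2) / (1 + \<rho>\<^sup>2 - 2 * \<rho> * cosh t)"
      using hyp_back[OF n r0 ev ex] by blast
    show ?thesis
    proof (cases "cosh (t * (real n + 1) / 2) = \<rho> * cosh (t * (real n - 1) / 2)")
      case True
      then have "ch n t = \<rho>" unfolding ch_iff .
      then have "t = x0" using x0(5) t by simp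
      then show ?thesis using xe x0(4) by simp
    next
      case False
      then have s: "sinh (t * (real n + 1) / 2) = \<rho> * sinh (t * (real n - 1) / 2)" using dis by simp
      then have sh: "sh n t = \<rho>" using sh_iff[OF n] t by simp
      have "sh n t > xi n" using sh_gt_xi[OF n t] t unfolding sh_def by simp
      then have big: "xi n < \<rho>" using sh by simp
      obtain x1 where x1: "x1 > 0" "sh n x1 = \<rho>"
          "lam n \<rho> 1 = (1 - \<rho>\<^sup>2) / (1 + \<rho>\<^sup>2 - 2 * \<rho> * cosh x1)" "\<forall>y\<ge>0. sh n y = \<rho> \<longrightarrow> y = x1"
        using lam1_big[OF n big] by blast
      have "t = x1" using x1(4) sh t by simp
      then show ?thesis using xe x1(3) big by simp
    qed
  qed
  show ?thesis
  proof (cases "xi n < \<rho>")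
    case True
    obtain x1 where x1: "x1 > 0" "sh n x1 = \<rho>" "lam n \<rho> 1 < - real n"
        "lam n \<rho> 1 = (1 - \<rho>\<^sup>2) / (1 + \<rho>\<^sup>2 - 2 * \<rho> * cosh x1)"
      using lam1_big[OF n True] by blast
    have ev1: "eigenvalue (KMS n \<rho>) (lam n \<rho> 1)"
      unfolding x1(4) using eig_hyp[OF n r0 x1(1)] x1(2) sh_iff[OF n, of x1] x1(1) by auto
    have "- real n < - (\<rho> + 1) / (\<rho> - 1)"
    proof -
      have n1: "real n - 1 > 0" using n by simp
      have "(real n + 1) / (real n - 1) < \<rho>" using True unfolding xi_def .
      then have "real n + 1 < \<rho> * (real n - 1)" using n1 by (simp add: field_simps)
      then have "\<rho> + 1 < real n * (\<rho> - 1)" by (simp add: algebra_simps)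
      then have lt: "(\<rho> + 1) / (\<rho> - 1) < real n" using r by (simp add: field_simps)
      have e: "- (\<rho> + 1) / (\<rho> - 1) = - ((\<rho> + 1) / (\<rho> - 1))" by (simp only: minus_divide_left)
      show ?thesis unfolding e using lt by linarith
    qed
    then have "lam n \<rho> 1 < - (\<rho> + 1) / (\<rho> - 1)" using x1(3) by linarith
    then have ex1: "extraordinary \<rho> (lam n \<rho> 1)" using not_ord_big[OF r] by blast
    have "\<forall>x. (eigenvalue (KMS n \<rho>) x \<and> extraordinary \<rho> x) \<longleftrightarrow> x = lam n \<rho> 0 \<or> x = lam n \<rho> 1"
      using sub ev0 ex0 ev1 ex1 by blast
    then show ?thesis using True by auto
  next
    case False
    have "\<forall>x. (eigenvalue (KMS n \<rho>) x \<and> extraordinary \<rho> x) \<longleftrightarrow> x = lam n \<rho> 0"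
      using sub ev0 ex0 False by blast
    then show ?thesis using False by auto
  qed
qed

lemma set_small:
  assumes n: "2 \<le> n" and r: "0 \<le> \<rho>" "\<rho> \<le> 1"
  shows "{x. eigenvalue (KMS n \<rho>) x \<and> extraordinary \<rho> x} = {}"
proof (cases "\<rho> = 0 \<or> \<rho> = 1")
  case True
  then show ?thesis unfolding extraordinary_def ordinary_def by auto
next
  case False
  then have r0: "0 < \<rho>" "\<rho> \<noteq> 1" "\<rho> < 1" using r by auto
  show ?thesis
  proof (rule ccontr)
    assume "\<not> ?thesis"
    then obtain x where x: "eigenvalue (KMS n \<rho>) x" "extraordinary \<rho> x" by auto
    obtain t where t: "t > 0" and dis: "cosh (t * (real n + 1) / 2) = \<rho> * cosh (t * (real n - 1) / 2)
               \<or> sinh (t * (real n + 1) / 2) = \<rho> * sinh (t * (real n - 1) / 2)"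
      using hyp_back[OF n r0(1,2) x] by blast
    have lt: "t * (real n - 1) / 2 < t * (real n + 1) / 2" "0 < t * (real n - 1) / 2" using t n by auto
    have c1: "cosh (t * (real n - 1) / 2) < cosh (t * (real n + 1) / 2)"
      using lt by (simp add: cosh_real_nonneg_less_iff)
    have c2: "\<rho> * cosh (t * (real n - 1) / 2) < cosh (t * (real n - 1) / 2)" using r0 by simp
    have s1: "sinh (t * (real n - 1) / 2) < sinh (t * (real n + 1) / 2)" using lt by simp
    have s2: "\<rho> * sinh (t * (real n - 1) / 2) < sinh (t * (real n - 1) / 2)" using r0 lt by simp
    show False using dis c1 c2 s1 s2 by auto
  qed
qed

lemma sig0_neg: "\<rho> \<noteq> 1 \<Longrightarrow> sigma \<rho> 0 = - (\<rho> + 1) / (\<rho> - 1)"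
proof -
  assume r: "\<rho> \<noteq> 1"
  then have "1 - \<rho> \<noteq> 0" "\<rho> - 1 \<noteq> 0" by auto
  then show ?thesis using sig_0[OF r] by (simp add: field_simps)
qed

lemma sigpi_neg: "0 \<le> \<rho> \<Longrightarrow> sigma \<rho> pi = - (\<rho> - 1) / (\<rho> + 1)"
  using sig_pi by (simp add: field_simps)

lemma order_big:
  assumes n: "2 \<le> n" and r: "1 < \<rho>" and m: "1 \<le> m"
    and H: "\<forall>k. m \<le> k \<and> k < n \<longrightarrow> lam n \<rho> k = sigma \<rho> (\<Theta> k) \<and> 0 \<le> \<Theta> k \<and> \<Theta> k \<le> beta n k \<and> (2 \<le> k \<longrightarrow> alpha n k < \<Theta> k)"
  shows "\<forall>k. m \<le> k \<and> k + 1 < n \<longrightarrow> lam n \<rho> k < lam n \<rho> (k + 1)"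
    and "\<forall>k. m \<le> k \<and> k < n \<longrightarrow> lam n \<rho> k < - (\<rho> - 1) / (\<rho> + 1)"
    and "\<forall>k. 2 \<le> k \<and> m \<le> k \<and> k < n \<longrightarrow> - (\<rho> + 1) / (\<rho> - 1) < lam n \<rho> k"
proof -
  have r0: "0 < \<rho>" "\<rho> \<noteq> 1" using r by auto
  show "\<forall>k. m \<le> k \<and> k + 1 < n \<longrightarrow> lam n \<rho> k < lam n \<rho> (k + 1)"
  proof (intro allI impI)
    fix k assume k: "m \<le> k \<and> k + 1 < n"
    have h1: "lam n \<rho> k = sigma \<rho> (\<Theta> k)" "0 \<le> \<Theta> k" "\<Theta> k \<le> beta n k" using H k by auto
    have h2: "lam n \<rho> (k + 1) = sigma \<rho> (\<Theta> (k + 1))" "\<Theta> (k + 1) \<le> beta n (k + 1)" "alpha n (k + 1) < \<Theta> (k + 1)"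
      using H k m by auto
    have "\<Theta> k < \<Theta> (k + 1)" using h1(3) ba[OF n, of k] h2(3) k m by simp
    moreover have "\<Theta> (k + 1) \<le> pi" using h2(2) beta_lt_pi[of "k + 1" n] k by simp
    ultimately show "lam n \<rho> k < lam n \<rho> (k + 1)" unfolding h1(1) h2(1) using sig_mono(1)[OF r0 h1(2)] r by blast
  qed
  show "\<forall>k. m \<le> k \<and> k < n \<longrightarrow> lam n \<rho> k < - (\<rho> - 1) / (\<rho> + 1)"
  proof (intro allI impI)
    fix k assume k: "m \<le> k \<and> k < n"
    have h1: "lam n \<rho> k = sigma \<rho> (\<Theta> k)" "0 \<le> \<Theta> k" "\<Theta> k \<le> beta n k" using H k by auto
    have "\<Theta> k < pi" using h1(3) beta_lt_pi[of k n] k by simp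
    then have "sigma \<rho> (\<Theta> k) < sigma \<rho> pi" using sig_mono(1)[OF r0 h1(2)] r by blast
    moreover have e: "sigma \<rho> pi = - (\<rho> - 1) / (\<rho> + 1)" using r by (intro sigpi_neg) simp
    ultimately show "lam n \<rho> k < - (\<rho> - 1) / (\<rho> + 1)" unfolding h1(1) by simp
  qed
  show "\<forall>k. 2 \<le> k \<and> m \<le> k \<and> k < n \<longrightarrow> - (\<rho> + 1) / (\<rho> - 1) < lam n \<rho> k"
  proof (intro allI impI)
    fix k assume k: "2 \<le> k \<and> m \<le> k \<and> k < n"
    have h1: "lam n \<rho> k = sigma \<rho> (\<Theta> k)" "alpha n k < \<Theta> k" "\<Theta> k \<le> beta n k" using H k by auto
    have "0 \<le> alpha n k" using abg(5)[OF n, of k] k by simp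
    then have p: "0 < \<Theta> k" using h1 by simp
    have "\<Theta> k \<le> pi" using h1(3) beta_lt_pi[of k n] k by simp
    then have "sigma \<rho> 0 < sigma \<rho> (\<Theta> k)" using sig_mono(1)[OF r0 _ p] r by simp
    then show "- (\<rho> + 1) / (\<rho> - 1) < lam n \<rho> k" unfolding h1(1) sig0_neg[OF r0(2)] .
  qed
qed

lemma part_zero:
  assumes n: "2 \<le> n"
  shows "\<forall>k<n. lam n 0 k = 1"
proof -
  obtain \<theta> where "\<forall>k<n. lam n 0 k = sigma 0 (\<theta> k)" using theta_low[OF n, of 0] by auto
  then show ?thesis unfolding sigma_def by simp
qed

lemma part_small:
  assumes n: "2 \<le> n" and r: "0 < \<rho>" "\<rho> < 1"
  shows "0 < (1 - \<rho>) / (1 + \<rho>) \<and> (1 - \<rho>) / (1 + \<rho>) < lam n \<rho> (n - 1)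
        \<and> (\<forall>k. k + 1 < n \<longrightarrow> lam n \<rho> (k + 1) < lam n \<rho> k)
        \<and> lam n \<rho> 0 < (1 + \<rho>) / (1 - \<rho>)"
proof -
  have r0: "0 < \<rho>" "\<rho> \<noteq> 1" using r by auto
  obtain \<theta> where th: "\<forall>k<n. lam n \<rho> k = sigma \<rho> (\<theta> k) \<and> beta n k \<le> \<theta> k \<and> \<theta> k \<le> gamma n k \<and> 0 < \<theta> k \<and> \<theta> k < pi"
    using theta_low[OF n less_imp_le[OF r(1)] r(2)] by blast
  have a: "0 < (1 - \<rho>) / (1 + \<rho>)" using r by simp
  have b: "(1 - \<rho>) / (1 + \<rho>) < lam n \<rho> (n - 1)"
  proof -
    have h: "lam n \<rho> (n - 1) = sigma \<rho> (\<theta> (n - 1))" "0 < \<theta> (n - 1)" "\<theta> (n - 1) < pi" using th n by auto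
    have "sigma \<rho> pi < sigma \<rho> (\<theta> (n - 1))" using sig_mono(2)[OF r0 _ h(3)] h r by simp
    then show ?thesis unfolding h(1) sig_pi[OF less_imp_le[OF r(1)]] .
  qed
  have c: "\<forall>k. k + 1 < n \<longrightarrow> lam n \<rho> (k + 1) < lam n \<rho> k"
  proof (intro allI impI)
    fix k assume k: "k + 1 < n"
    have h1: "lam n \<rho> k = sigma \<rho> (\<theta> k)" "0 < \<theta> k" "\<theta> k \<le> gamma n k" using th k by auto
    have h2: "lam n \<rho> (k + 1) = sigma \<rho> (\<theta> (k + 1))" "beta n (k + 1) \<le> \<theta> (k + 1)" "\<theta> (k + 1) < pi"
      using th k by auto
    have "\<theta> k < \<theta> (k + 1)" using h1(3) gb[OF n, of k] h2(2) by simp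
    then show "lam n \<rho> (k + 1) < lam n \<rho> k" unfolding h1(1) h2(1)
      using sig_mono(2)[OF r0 _ _ _] h1(2) h2(3) r by simp
  qed
  have d: "lam n \<rho> 0 < (1 + \<rho>) / (1 - \<rho>)"
  proof -
    have h: "lam n \<rho> 0 = sigma \<rho> (\<theta> 0)" "0 < \<theta> 0" "\<theta> 0 < pi" using th n by auto
    have "sigma \<rho> (\<theta> 0) < sigma \<rho> 0" using sig_mono(2)[OF r0 _ h(2)] h r by simp
    then show ?thesis unfolding h(1) sig_0[OF r0(2)] .
  qed
  show ?thesis using a b c d by blast
qed

lemma part_one:
  assumes n: "2 \<le> n"
  shows "(\<forall>k. 1 \<le> k \<and> k < n \<longrightarrow> lam n 1 k = 0) \<and> 0 < lam n 1 0 \<and> lam n 1 0 = real n"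
proof -
  have xi: "1 < xi n" using xi_gt1[OF n] .
  obtain t where t: "lam n 1 1 = sigma 1 t" using theta_one[OF n _ xi] by auto
  obtain \<theta> where th: "\<forall>k. 2 \<le> k \<and> k < n \<longrightarrow> lam n 1 k = sigma 1 (\<theta> k)" using theta_high[OF n, of 1] by auto
  have "\<forall>k. 1 \<le> k \<and> k < n \<longrightarrow> lam n 1 k = 0"
  proof (intro allI impI)
    fix k assume k: "1 \<le> k \<and> k < n"
    show "lam n 1 k = 0"
    proof (cases "k = 1")
      case True then show ?thesis using t unfolding sigma_def by simp
    next
      case False then show ?thesis using th k unfolding sigma_def by simp
    qed
  qed
  moreover have "lam n 1 0 = real n"
  proof -
    obtain x where x: "0 \<le> x" "ch n x = 1" "mu n 1 0 = \<i> * complex_of_real x" using mu0_hyp[OF n, of 1] by auto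
    have "ch n 0 = 1" unfolding ch_def by simp
    then have "x = 0" using ch_unique[OF n x(1) _] x(2) by simp
    then show ?thesis using lam_hyp[OF x(3)] by simp
  qed
  ultimately show ?thesis using n by simp
qed

lemma neg_lt0: "1 < \<rho> \<Longrightarrow> - (\<rho> - 1) / (\<rho> + 1) < (0::real)"
  by (simp add: field_simps)

lemma part_mid:
  assumes n: "2 \<le> n" and r: "1 < \<rho>" "\<rho> < xi n"
  shows "- (\<rho> + 1) / (\<rho> - 1) < lam n \<rho> 1
        \<and> (\<forall>k. 1 \<le> k \<and> k + 1 < n \<longrightarrow> lam n \<rho> k < lam n \<rho> (k + 1))
        \<and> lam n \<rho> (n - 1) < - (\<rho> - 1) / (\<rho> + 1)
        \<and> - (\<rho> - 1) / (\<rho> + 1) < 0 \<and> 0 < real n \<and> real n < lam n \<rho> 0"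
proof -
  have r0: "0 < \<rho>" "\<rho> \<noteq> 1" using r by auto
  obtain t1 where t1: "lam n \<rho> 1 = sigma \<rho> t1" "0 < t1" "t1 \<le> beta n 1" using theta_one[OF n less_imp_le[OF r(1)] r(2)] by blast
  obtain \<theta> where th: "\<forall>k. 2 \<le> k \<and> k < n \<longrightarrow> lam n \<rho> k = sigma \<rho> (\<theta> k) \<and> alpha n k < \<theta> k \<and> \<theta> k \<le> beta n k"
    using theta_high[OF n less_imp_le[OF r(1)]] by blast
  define \<Theta> where "\<Theta> k = (if k = 1 then t1 else \<theta> k)" for k
  have H: "\<forall>k. 1 \<le> k \<and> k < n \<longrightarrow> lam n \<rho> k = sigma \<rho> (\<Theta> k) \<and> 0 \<le> \<Theta> k \<and> \<Theta> k \<le> beta n k \<and> (2 \<le> k \<longrightarrow> alpha n k < \<Theta> k)"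
  proof (intro allI impI)
    fix k assume k: "1 \<le> k \<and> k < n"
    show "lam n \<rho> k = sigma \<rho> (\<Theta> k) \<and> 0 \<le> \<Theta> k \<and> \<Theta> k \<le> beta n k \<and> (2 \<le> k \<longrightarrow> alpha n k < \<Theta> k)"
    proof (cases "k = 1")
      case True then show ?thesis using t1 unfolding \<Theta>_def by simp
    next
      case False
      then have k2: "2 \<le> k" using k by simp
      have "0 \<le> alpha n k" using abg(5)[OF n, of k] k by simp
      then show ?thesis using th k k2 False unfolding \<Theta>_def by auto
    qed
  qed
  note O = order_big[OF n r(1) _ H]
  have a: "- (\<rho> + 1) / (\<rho> - 1) < lam n \<rho> 1"
  proof -
    have "t1 \<le> pi" using t1(3) beta_lt_pi[of 1 n] n by simp
    then have "sigma \<rho> 0 < sigma \<rho> t1" using sig_mono(1)[OF r0 _ t1(2)] r by simp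
    then show ?thesis unfolding t1(1) sig0_neg[OF r0(2)] .
  qed
  have b: "lam n \<rho> (n - 1) < - (\<rho> - 1) / (\<rho> + 1)" using O(2) n by simp
  obtain x0 where "real n < lam n \<rho> 0" using lam0_big[OF n r(1)] by blast
  then show ?thesis using a b O(1) neg_lt0[OF r(1)] n by simp
qed

lemma part_xi:
  assumes n: "2 \<le> n" and r: "\<rho> = xi n"
  shows "- real n = lam n \<rho> 1
        \<and> (\<forall>k. 1 \<le> k \<and> k + 1 < n \<longrightarrow> lam n \<rho> k < lam n \<rho> (k + 1))
        \<and> lam n \<rho> (n - 1) < - 1 / real n
        \<and> - 1 / real n < 0 \<and> 0 < real n \<and> real n < lam n \<rho> 0"
proof -
  have r1: "1 < \<rho>" using xi_gt1[OF n] r by simp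
  have r0: "0 < \<rho>" "\<rho> \<noteq> 1" using r1 by auto
  note L1 = lam1_xi[OF n r]
  obtain \<theta> where th: "\<forall>k. 2 \<le> k \<and> k < n \<longrightarrow> lam n \<rho> k = sigma \<rho> (\<theta> k) \<and> alpha n k < \<theta> k \<and> \<theta> k \<le> beta n k"
    using theta_high[OF n less_imp_le[OF r1]] by blast
  define \<Theta> where "\<Theta> k = (if k = 1 then 0 else \<theta> k)" for k
  have H: "\<forall>k. 1 \<le> k \<and> k < n \<longrightarrow> lam n \<rho> k = sigma \<rho> (\<Theta> k) \<and> 0 \<le> \<Theta> k \<and> \<Theta> k \<le> beta n k \<and> (2 \<le> k \<longrightarrow> alpha n k < \<Theta> k)"
  proof (intro allI impI)
    fix k assume k: "1 \<le> k \<and> k < n"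
    show "lam n \<rho> k = sigma \<rho> (\<Theta> k) \<and> 0 \<le> \<Theta> k \<and> \<Theta> k \<le> beta n k \<and> (2 \<le> k \<longrightarrow> alpha n k < \<Theta> k)"
    proof (cases "k = 1")
      case True then show ?thesis using L1(2) abg(4)[OF n, of 1] n unfolding \<Theta>_def by simp
    next
      case False
      then have k2: "2 \<le> k" using k by simp
      have "0 \<le> alpha n k" using abg(5)[OF n, of k] k by simp
      then show ?thesis using th k k2 False unfolding \<Theta>_def by auto
    qed
  qed
  note O = order_big[OF n r1 _ H]
  have e: "- (\<rho> - 1) / (\<rho> + 1) = - 1 / real n"
  proof -
    have n1: "real n - 1 > 0" using n by simp
    then show ?thesis unfolding r xi_def by (simp add: field_simps)
  qed
  have b: "lam n \<rho> (n - 1) < - 1 / real n" using O(2) n unfolding e by simp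
  obtain x0 where "real n < lam n \<rho> 0" using lam0_big[OF n r1] by blast
  then show ?thesis using b O(1) L1(1) n by simp
qed

lemma part_large:
  assumes n: "2 \<le> n" and r: "xi n < \<rho>"
  shows "lam n \<rho> 1 < - real n \<and> - real n < - (\<rho> + 1) / (\<rho> - 1)
        \<and> - (\<rho> + 1) / (\<rho> - 1) < - (\<rho> - 1) / (\<rho> + 1)
        \<and> (\<forall>k. 2 \<le> k \<and> k < n \<longrightarrow>
               - (\<rho> + 1) / (\<rho> - 1) < lam n \<rho> k \<and> lam n \<rho> k < - (\<rho> - 1) / (\<rho> + 1))
        \<and> (\<forall>k. 2 \<le> k \<and> k + 1 < n \<longrightarrow> lam n \<rho> k < lam n \<rho> (k + 1))
        \<and> - (\<rho> - 1) / (\<rho> + 1) < 0 \<and> 0 < real n \<and> real n < lam n \<rho> 0"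
proof -
  have r1: "1 < \<rho>" using xi_gt1[OF n] r by simp
  obtain \<theta> where th: "\<forall>k. 2 \<le> k \<and> k < n \<longrightarrow> lam n \<rho> k = sigma \<rho> (\<theta> k) \<and> alpha n k < \<theta> k \<and> \<theta> k \<le> beta n k"
    using theta_high[OF n less_imp_le[OF r1]] by blast
  have H: "\<forall>k. 2 \<le> k \<and> k < n \<longrightarrow> lam n \<rho> k = sigma \<rho> (\<theta> k) \<and> 0 \<le> \<theta> k \<and> \<theta> k \<le> beta n k \<and> (2 \<le> k \<longrightarrow> alpha n k < \<theta> k)"
  proof (intro allI impI)
    fix k assume k: "2 \<le> k \<and> k < n"
    have "0 \<le> alpha n k" using abg(5)[OF n, of k] k by simp
    then show "lam n \<rho> k = sigma \<rho> (\<theta> k) \<and> 0 \<le> \<theta> k \<and> \<theta> k \<le> beta n k \<and> (2 \<le> k \<longrightarrow> alpha n k < \<theta> k)"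
      using th k by auto
  qed
  note O = order_big[OF n r1 _ H]
  obtain x1 where "lam n \<rho> 1 < - real n" using lam1_big[OF n r] by blast
  moreover have "- real n < - (\<rho> + 1) / (\<rho> - 1)"
  proof -
    have n1: "real n - 1 > 0" using n by simp
    have "(real n + 1) / (real n - 1) < \<rho>" using r unfolding xi_def .
    then have "real n + 1 < \<rho> * (real n - 1)" using n1 by (simp add: field_simps)
    then have "\<rho> + 1 < real n * (\<rho> - 1)" by (simp add: algebra_simps)
    then have lt: "(\<rho> + 1) / (\<rho> - 1) < real n" using r1 by (simp add: field_simps)
    have e: "- (\<rho> + 1) / (\<rho> - 1) = - ((\<rho> + 1) / (\<rho> - 1))" by (simp only: minus_divide_left)
    show ?thesis unfolding e using lt by linarith
  qed
  moreover have "- (\<rho> + 1) / (\<rho> - 1) < - (\<rho> - 1) / (\<rho> + 1)"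
  proof -
    have l: "(\<rho> - 1) / (\<rho> + 1) < 1" "1 < (\<rho> + 1) / (\<rho> - 1)" using r1 by (simp_all add: field_simps)
    have e: "- (\<rho> + 1) / (\<rho> - 1) = - ((\<rho> + 1) / (\<rho> - 1))" "- (\<rho> - 1) / (\<rho> + 1) = - ((\<rho> - 1) / (\<rho> + 1))"
      by (simp_all only: minus_divide_left)
    show ?thesis unfolding e using l by linarith
  qed
  moreover obtain x0 where "real n < lam n \<rho> 0" using lam0_big[OF n r1] by blast
  ultimately show ?thesis using O n neg_lt0[OF r1] by auto
qed

theorem theorem6p6:
  fixes n :: nat and \<rho> :: real
  assumes "n \<ge> 2" and "\<rho> \<ge> 0"
  shows
   "(\<rho> > xi n \<longrightarrow>
        {x. eigenvalue (KMS n \<rho>) x \<and> extraordinary \<rho> x} = {lam n \<rho> 0, lam n \<rho> 1}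
        \<and> lam n \<rho> 0 \<noteq> lam n \<rho> 1)
  \<and> (1 < \<rho> \<and> \<rho> \<le> xi n \<longrightarrow>
        {x. eigenvalue (KMS n \<rho>) x \<and> extraordinary \<rho> x} = {lam n \<rho> 0})
  \<and> (\<rho> \<le> 1 \<longrightarrow>
        {x. eigenvalue (KMS n \<rho>) x \<and> extraordinary \<rho> x} = {})
  \<and> (\<rho> = 0 \<longrightarrow> (\<forall>k<n. lam n \<rho> k = 1))
  \<and> (0 < \<rho> \<and> \<rho> < 1 \<longrightarrow>
        0 < (1 - \<rho>) / (1 + \<rho>) \<and> (1 - \<rho>) / (1 + \<rho>) < lam n \<rho> (n - 1)
        \<and> (\<forall>k. k + 1 < n \<longrightarrow> lam n \<rho> (k + 1) < lam n \<rho> k)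
        \<and> lam n \<rho> 0 < (1 + \<rho>) / (1 - \<rho>))
  \<and> (\<rho> = 1 \<longrightarrow>
        (\<forall>k. 1 \<le> k \<and> k < n \<longrightarrow> lam n \<rho> k = 0) \<and> 0 < lam n \<rho> 0 \<and> lam n \<rho> 0 = real n)
  \<and> (1 < \<rho> \<and> \<rho> < xi n \<longrightarrow>
        - (\<rho> + 1) / (\<rho> - 1) < lam n \<rho> 1
        \<and> (\<forall>k. 1 \<le> k \<and> k + 1 < n \<longrightarrow> lam n \<rho> k < lam n \<rho> (k + 1))
        \<and> lam n \<rho> (n - 1) < - (\<rho> - 1) / (\<rho> + 1)
        \<and> - (\<rho> - 1) / (\<rho> + 1) < 0 \<and> 0 < real n \<and> real n < lam n \<rho> 0)
  \<and> (\<rho> = xi n \<longrightarrow>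
        - real n = lam n \<rho> 1
        \<and> (\<forall>k. 1 \<le> k \<and> k + 1 < n \<longrightarrow> lam n \<rho> k < lam n \<rho> (k + 1))
        \<and> lam n \<rho> (n - 1) < - 1 / real n
        \<and> - 1 / real n < 0 \<and> 0 < real n \<and> real n < lam n \<rho> 0)
  \<and> (\<rho> > xi n \<longrightarrow>
        lam n \<rho> 1 < - real n \<and> - real n < - (\<rho> + 1) / (\<rho> - 1)
        \<and> - (\<rho> + 1) / (\<rho> - 1) < - (\<rho> - 1) / (\<rho> + 1)
        \<and> (\<forall>k. 2 \<le> k \<and> k < n \<longrightarrow>
               - (\<rho> + 1) / (\<rho> - 1) < lam n \<rho> k \<and> lam n \<rho> k < - (\<rho> - 1) / (\<rho> + 1))
        \<and> (\<forall>k. 2 \<le> k \<and> k + 1 < n \<longrightarrow> lam n \<rho> k < lam n \<rho> (k + 1))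
        \<and> - (\<rho> - 1) / (\<rho> + 1) < 0 \<and> 0 < real n \<and> real n < lam n \<rho> 0)"
proof -
  have n: "2 \<le> n" using assms(1) .
  have r: "0 \<le> \<rho>" using assms(2) .
  have xi1: "1 < xi n" using xi_gt1[OF n] .
  have A1: "\<rho> > xi n \<longrightarrow>
        {x. eigenvalue (KMS n \<rho>) x \<and> extraordinary \<rho> x} = {lam n \<rho> 0, lam n \<rho> 1}
        \<and> lam n \<rho> 0 \<noteq> lam n \<rho> 1"
  proof
    assume h: "\<rho> > xi n"
    then have r1: "1 < \<rho>" using xi1 by simp
    have "real n < lam n \<rho> 0" using lam0_big[OF n r1] by blast
    moreover have "lam n \<rho> 1 < - real n" using lam1_big[OF n h] by blast
    ultimately show "{x. eigenvalue (KMS n \<rho>) x \<and> extraordinary \<rho> x} = {lam n \<rho> 0, lam n \<rho> 1}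
        \<and> lam n \<rho> 0 \<noteq> lam n \<rho> 1" using set_big[OF n r1] h by auto
  qed
  have A2: "1 < \<rho> \<and> \<rho> \<le> xi n \<longrightarrow>
        {x. eigenvalue (KMS n \<rho>) x \<and> extraordinary \<rho> x} = {lam n \<rho> 0}"
    using set_big[OF n] by auto
  have A3: "\<rho> \<le> 1 \<longrightarrow> {x. eigenvalue (KMS n \<rho>) x \<and> extraordinary \<rho> x} = {}"
    using set_small[OF n r] by blast
  have A4: "\<rho> = 0 \<longrightarrow> (\<forall>k<n. lam n \<rho> k = 1)" using part_zero[OF n] by blast
  have A5: "0 < \<rho> \<and> \<rho> < 1 \<longrightarrow>
        0 < (1 - \<rho>) / (1 + \<rho>) \<and> (1 - \<rho>) / (1 + \<rho>) < lam n \<rho> (n - 1)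
        \<and> (\<forall>k. k + 1 < n \<longrightarrow> lam n \<rho> (k + 1) < lam n \<rho> k)
        \<and> lam n \<rho> 0 < (1 + \<rho>) / (1 - \<rho>)" using part_small[OF n] by blast
  have A6: "\<rho> = 1 \<longrightarrow>
        (\<forall>k. 1 \<le> k \<and> k < n \<longrightarrow> lam n \<rho> k = 0) \<and> 0 < lam n \<rho> 0 \<and> lam n \<rho> 0 = real n"
    using part_one[OF n] by blast
  have A7: "1 < \<rho> \<and> \<rho> < xi n \<longrightarrow>
        - (\<rho> + 1) / (\<rho> - 1) < lam n \<rho> 1
        \<and> (\<forall>k. 1 \<le> k \<and> k + 1 < n \<longrightarrow> lam n \<rho> k < lam n \<rho> (k + 1))
        \<and> lam n \<rho> (n - 1) < - (\<rho> - 1) / (\<rho> + 1)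
        \<and> - (\<rho> - 1) / (\<rho> + 1) < 0 \<and> 0 < real n \<and> real n < lam n \<rho> 0"
    using part_mid[OF n] by blast
  have A8: "\<rho> = xi n \<longrightarrow>
        - real n = lam n \<rho> 1
        \<and> (\<forall>k. 1 \<le> k \<and> k + 1 < n \<longrightarrow> lam n \<rho> k < lam n \<rho> (k + 1))
        \<and> lam n \<rho> (n - 1) < - 1 / real n
        \<and> - 1 / real n < 0 \<and> 0 < real n \<and> real n < lam n \<rho> 0"
    using part_xi[OF n] by blast
  have A9: "\<rho> > xi n \<longrightarrow>
        lam n \<rho> 1 < - real n \<and> - real n < - (\<rho> + 1) / (\<rho> - 1)
        \<and> - (\<rho> + 1) / (\<rho> - 1) < - (\<rho> - 1) / (\<rho> + 1)
        \<and> (\<forall>k. 2 \<le> k \<and> k < n \<longrightarrow>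
               - (\<rho> + 1) / (\<rho> - 1) < lam n \<rho> k \<and> lam n \<rho> k < - (\<rho> - 1) / (\<rho> + 1))
        \<and> (\<forall>k. 2 \<le> k \<and> k + 1 < n \<longrightarrow> lam n \<rho> k < lam n \<rho> (k + 1))
        \<and> - (\<rho> - 1) / (\<rho> + 1) < 0 \<and> 0 < real n \<and> real n < lam n \<rho> 0"
    using part_large[OF n] by blast
  show ?thesis using A1 A2 A3 A4 A5 A6 A7 A8 A9 by blast
qed

end
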